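(* Let $U\subset\mathbb C$ be a convex domain bounded by a smooth Jordan curve, and let $f$ be holomorphic in a neighborhood of $\overline U$ with $\operatorname{Re}(f')>0$ in $U$ and $f(z)\ne z$ for all $z\in\partial U$. Let $\omega_f$ be the Buff form of $f$, $V^*=\{z\in U\cap f^{-1}(U): f(z)\ne z\}$, and define $$u_f(z)=-1+\int_{[z,f(z)]}\omega_f(s)\,ds\qquad(z\in V^* ).$$ If $p\in U$ is a fixed point of $f$, then $u_f$ extends holomorphically to $p$ with $u_f(p)=0$. Moreover, if $f'(p)=1$ and $p$ has fixed point multiplicity $q+1\ge2$, then $u_f$ has a zero of order $2q$ at $p$.
   Context: $\operatorname{Log}$ is the principal branch of the logarithm. The Buff form of $f$ is $\omega_f=\frac{f'(z)-1}{(f(z)-z)\operatorname{Log} f'(z)}\,dz$ (the factor $(f'-1)/\operatorname{Log}f'$ being $1$ where $f'=1$); it is meromorphic in $U$ with poles at the fixed points of $f$. For $z\in V^*$ the segment $[z,f(z)]$ lies in $U$ and contains no fixed point of $f$, so the integral is well defined. The fixed point multiplicity of $p$ is its multiplicity as a root of $f(z)-z$. *)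

theory Defs
  imports "HOL-Complex_Analysis.Complex_Analysis"
begin

text \<open>A smooth Jordan curve: the image of a 1-periodic, infinitely differentiable
  map from the reals with nowhere vanishing derivative, injective on one period.\<close>
definition smooth_jordan_curve :: "complex set \<Rightarrow> bool" where
  "smooth_jordan_curve C \<longleftrightarrow>
     (\<exists>D :: nat \<Rightarrow> real \<Rightarrow> complex.
        (\<forall>n t. (D n has_vector_derivative D (Suc n) t) (at t)) \<and>
        (\<forall>t. D 1 t \<noteq> 0) \<and>
        (\<forall>t. D 0 (t + 1) = D 0 t) \<and>
        inj_on (D 0) {0..<1} \<and>
        C = D 0 ` {0..1})"

definition buff_factor :: "complex \<Rightarrow> complex" where
  "buff_factor w = (if w = 1 then 1 else (w - 1) / Ln w)"

text \<open>Coefficient of the Buff form omega_f = (f' - 1) / ((f - z) Log f') dz.\<close>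
definition buff_form :: "(complex \<Rightarrow> complex) \<Rightarrow> complex \<Rightarrow> complex" where
  "buff_form f s = buff_factor (deriv f s) / (f s - s)"

definition buff_u :: "(complex \<Rightarrow> complex) \<Rightarrow> complex \<Rightarrow> complex" where
  "buff_u f z = -1 + contour_integral (linepath z (f z)) (buff_form f)"

definition Vstar :: "complex set \<Rightarrow> (complex \<Rightarrow> complex) \<Rightarrow> complex set" where
  "Vstar U f = {z \<in> U. f z \<in> U \<and> f z \<noteq> z}"

definition zero_of_order :: "(complex \<Rightarrow> complex) \<Rightarrow> complex \<Rightarrow> nat \<Rightarrow> bool" where
  "zero_of_order g p n \<longleftrightarrow>
     (\<exists>r>0. \<exists>h. h holomorphic_on ball p r \<and> h p \<noteq> 0 \<and>
        (\<forall>w\<in>ball p r. g w = (w - p) ^ n * h w))"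

end

theory Submission
  imports Defs
begin

lemma buff_factor_at1: "(buff_factor \<longlongrightarrow> 1) (at 1)"
proof -
  have d: "((\<lambda>y. (Ln y - Ln 1) / (y - 1)) \<longlongrightarrow> 1) (at 1)"
    using has_field_derivative_Ln[of 1] by (simp add: has_field_derivative_iff)
  then have "((\<lambda>y. inverse (Ln y / (y - 1))) \<longlongrightarrow> inverse 1) (at 1)"
    by (intro tendsto_inverse) auto
  moreover have "\<forall>\<^sub>F y in at 1. inverse (Ln y / (y - 1)) = buff_factor y"
    by (auto simp: eventually_at_filter buff_factor_def)
  ultimately show ?thesis
    by (auto intro: Lim_transform_eventually)
qed

lemma Ln_zero_imp: "Ln w = 0 \<Longrightarrow> 0 < Re w \<Longrightarrow> w = 1"
proof -
  assume "Ln w = 0" "0 < Re w"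
  then have "w \<noteq> 0" by auto
  then have "exp (Ln w) = w" by simp
  with \<open>Ln w = 0\<close> show "w = 1" by simp
qed

lemma buff_factor_holo: "buff_factor holomorphic_on {w. Re w > 0}"
proof (rule no_isolated_singularity'[where K="{1}"])
  show "open {w. Re w > 0}" by (simp add: open_halfspace_Re_gt)
  show "(buff_factor \<longlongrightarrow> buff_factor z) (at z within {w. Re w > 0})" if "z \<in> {1}" for z
    using that buff_factor_at1 by (auto simp: buff_factor_def intro: tendsto_within_subset)
  have "(\<lambda>w. (w - 1) / Ln w) holomorphic_on {w. Re w > 0} - {1}"
    by (intro holomorphic_intros) (auto simp: nonpos_Reals_def dest!: Ln_zero_imp)
  then show "buff_factor holomorphic_on {w. Re w > 0} - {1}"
    by (rule holomorphic_transform) (auto simp: buff_factor_def)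
qed auto


lemma Ln_taylor3:
  assumes "norm x \<le> 1/2"
  shows "norm (Ln (1+x) - (x - x^2/2 + x^3/3)) \<le> 16 * norm x ^ 4"
proof -
  define F :: "nat \<Rightarrow> complex \<Rightarrow> complex" where
    "F = (\<lambda>i. if i = 0 then Ln else if i = 1 then (\<lambda>w. 1/w) else if i = 2 then (\<lambda>w. -1/w^2)
             else if i = 3 then (\<lambda>w. 2/w^3) else (\<lambda>w. -6/w^4))"
  have F0: "F 0 = Ln" and F1: "F 1 = (\<lambda>w. 1/w)" and F2: "F 2 = (\<lambda>w. -1/w^2)"
    and F3: "F 3 = (\<lambda>w. 2/w^3)" and F4: "F 4 = (\<lambda>w. -6/w^4)"
    by (simp_all add: F_def)
  have S: "\<And>w::complex. w \<in> cball 1 (1/2) \<Longrightarrow> norm w \<ge> 1/2 \<and> w \<noteq> 0 \<and> w \<notin> \<real>\<^sub>\<le>\<^sub>0"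
  proof -
    fix w :: complex assume "w \<in> cball 1 (1/2)"
    then have d: "norm (1 - w) \<le> 1/2" by (simp add: dist_norm)
    have "1 \<le> norm w + norm (1 - w)" using norm_triangle_ineq[of w "1-w"] by simp
    with d have "norm w \<ge> 1/2" by linarith
    moreover have "Re w \<ge> 1/2" using d abs_Re_le_cmod[of "1-w"] by auto
    ultimately show "norm w \<ge> 1/2 \<and> w \<noteq> 0 \<and> w \<notin> \<real>\<^sub>\<le>\<^sub>0"
      by (auto simp: nonpos_Reals_def)
  qed
  have der: "(F i has_field_derivative F (Suc i) w) (at w within cball 1 (1/2))"
    if "w \<in> cball 1 (1/2)" "i \<le> 3" for i w
  proof -
    from S[OF that(1)] have w: "w \<noteq> 0" "w \<notin> \<real>\<^sub>\<le>\<^sub>0" by auto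
    have "i = 0 \<or> i = 1 \<or> i = 2 \<or> i = 3" using that(2) by auto
    then show ?thesis
    proof (elim disjE)
      have "F (Suc 0) w = inverse w" using F1 by (simp add: divide_inverse)
      then have "(F 0 has_field_derivative F (Suc 0) w) (at w within cball 1 (1/2))"
        using has_field_derivative_Ln[OF w(2)] F0 by (metis has_field_derivative_at_within)
      moreover assume "i = 0" ultimately show ?thesis by simp
    next
      have "((\<lambda>w. 1/w) has_field_derivative (-1/w^2)) (at w within cball 1 (1/2))"
        using w by (auto intro!: derivative_eq_intros simp: power2_eq_square)
      moreover assume "i = 1" ultimately show ?thesis using F1 F2 by (simp add: numeral_2_eq_2)
    next
      have "((\<lambda>w. -1/w^2) has_field_derivative (2/w^3)) (at w within cball 1 (1/2))"
        using w by (auto intro!: derivative_eq_intros simp: field_simps power2_eq_square power3_eq_cube)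
      moreover assume "i = 2" ultimately show ?thesis using F2 F3 by (simp add: numeral_3_eq_3 numeral_2_eq_2)
    next
      have "((\<lambda>w. 2/w^3) has_field_derivative (-6/w^4)) (at w within cball 1 (1/2))"
        using w by (auto intro!: derivative_eq_intros simp: field_simps power2_eq_square power3_eq_cube power4_eq_xxxx)
      moreover assume "i = 3" ultimately show ?thesis using F3 F4 by (simp add: numeral_3_eq_3 eval_nat_numeral)
    qed
  qed
  have bnd: "norm (F (Suc 3) w) \<le> 96" if "w \<in> cball 1 (1/2)" for w
  proof -
    from S[OF that] have w: "norm w \<ge> 1/2" "w \<noteq> 0" by auto
    have "(1/2::real)^4 \<le> norm w ^ 4" using power_mono[OF w(1), of 4] by simp
    then have "norm w ^ 4 \<ge> 1/16" by (simp add: power_divide)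
    moreover have "norm (F (Suc 3) w) = 6 / norm w ^ 4"
      using F4 by (simp add: norm_divide norm_power)
    moreover have "6 / norm w ^ 4 \<le> 6 / (1/16)"
      by (rule divide_left_mono) (use \<open>norm w ^ 4 \<ge> 1/16\<close> in auto)
    ultimately show ?thesis by simp
  qed
  have x1: "1 + x \<in> cball 1 (1/2)" using assms by (simp add: dist_norm)
  have "norm (F 0 (1+x) - (\<Sum>i\<le>3. F i 1 * (1 + x - 1) ^ i / fact i)) \<le> 96 * norm (1 + x - 1) ^ Suc 3 / fact 3"
    by (rule complex_Taylor[OF convex_cball der bnd _ x1]) (auto simp: dist_norm)
  moreover have "(\<Sum>i\<le>3. F i 1 * (1 + x - 1) ^ i / fact i) = x - x^2/2 + x^3/3"
  proof -
    have "(\<Sum>i\<le>3. F i 1 * (1 + x - 1) ^ i / fact i) = F 0 1 + F 1 1 * x + F 2 1 * x^2 / 2 + F 3 1 * x^3/6"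
      by (simp add: eval_nat_numeral fact_numeral)
    also have "\<dots> = x - x^2/2 + x^3/3" using F0 F1 F2 F3 by simp
    finally show ?thesis .
  qed
  ultimately have "norm (Ln (1+x) - (x - x^2/2 + x^3/3)) \<le> 96 * norm x ^ 4 / 6"
    by (simp add: F0 fact_numeral)
  then show ?thesis by simp
qed


lemma buff_taylor:
  assumes "norm x \<le> 1/10"
  shows "norm (buff_factor (1+x) - (1 + x/2 - x^2/12)) \<le> 66 * norm x ^ 3"
proof (cases "x = 0")
  case True then show ?thesis by (simp add: buff_factor_def)
next
  case False
  define n where "n = norm x"
  have n0: "0 < n" "n \<le> 1/10" using False assms by (auto simp: n_def)
  have n2: "n^2 \<le> n/10"
    using mult_left_mono[OF n0(2), of n] n0 by (simp add: power2_eq_square)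
  have n2': "n^2 \<le> 1/100" using power_mono[OF n0(2), of 2] n0 by (simp add: power_divide)
  have n3: "n^3 \<le> n/100"
    using mult_left_mono[OF n2', of n] n0 by (simp add: power3_eq_cube power2_eq_square)
  have n4: "n^4 \<le> n^3/10"
    using mult_right_mono[OF n0(2), of "n^3"] n0 by (simp add: power3_eq_cube power4_eq_xxxx mult.commute)
  define L where "L = Ln (1+x)"
  define e where "e = (L - (x - x^2/2 + x^3/3)) / x"
  have "norm (L - (x - x^2/2 + x^3/3)) \<le> 16 * n ^ 4"
    unfolding L_def n_def by (rule Ln_taylor3) (use assms in simp)
  then have ne: "norm e \<le> 16 * n^3"
    using n0 by (simp add: e_def norm_divide n_def[symmetric] divide_le_eq power4_eq_xxxx power3_eq_cube mult.commute mult.left_commute)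
  define v where "v = -x/2 + x^2/3 + e"
  have Lv: "L = x * (1 + v)" using False by (simp add: v_def e_def field_simps power2_eq_square power3_eq_cube)
  have "norm v \<le> n/2 + n^2/3 + 16*n^3"
    unfolding v_def using ne
    by (intro order.trans[OF norm_triangle_ineq] add_mono)
       (auto simp: n_def norm_divide norm_power intro!: order.trans[OF norm_triangle_ineq4])
  also have "\<dots> \<le> 1/2" using n0 n2 n3 by linarith
  finally have nv: "norm v \<le> 1/2" .
  have n1v: "norm (1 + v) \<ge> 1/2"
    using norm_triangle_ineq2[of 1 "-v"] nv by simp
  then have v1: "1 + v \<noteq> 0" by auto
  have B: "buff_factor (1+x) = 1 / (1 + v)"
    using False v1 by (simp add: buff_factor_def L_def[symmetric] Lv)
  define P where "P = 1 + x/2 - x^2/12"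
  have nP: "norm P \<le> 2"
  proof -
    have "norm P \<le> 1 + n/2 + n^2/12" unfolding P_def n_def
      by (intro order.trans[OF norm_triangle_ineq4] add_mono order.trans[OF norm_triangle_ineq])
         (auto simp: norm_divide norm_power)
    then show ?thesis using n0 n2 by linarith
  qed
  have id: "1 - P * (1 + v) = -5*x^3/24 + x^4/36 - P * e"
    unfolding P_def v_def by (simp add: field_simps power2_eq_square power3_eq_cube power4_eq_xxxx)
  have Pe: "norm (P * e) \<le> 2 * (16 * n^3)"
    unfolding norm_mult by (rule mult_mono[OF nP ne]) auto
  have "norm (-5*x^3/24 + x^4/36) \<le> 5*n^3/24 + n^4/36"
    by (rule order.trans[OF norm_triangle_ineq]) (simp add: n_def norm_divide norm_power norm_mult)
  then have "norm (1 - P * (1 + v)) \<le> 5*n^3/24 + n^4/36 + 2 * (16 * n^3)"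
    unfolding id using Pe norm_triangle_ineq4[of "-5*x^3/24 + x^4/36" "P * e"] by linarith
  also have "\<dots> \<le> 33 * n^3" using n4 n0 zero_le_power[of n 3] by linarith
  finally have num: "norm (1 - P * (1 + v)) \<le> 33 * n^3" .
  have "buff_factor (1+x) - P = (1 - P * (1 + v)) / (1 + v)"
    using v1 by (simp add: B field_simps)
  then have "norm (buff_factor (1+x) - P) = norm (1 - P * (1 + v)) / norm (1 + v)"
    by (simp add: norm_divide)
  also have "\<dots> \<le> (33 * n^3) / (1/2)"
    by (rule frac_le) (use num n1v n0 in auto)
  finally show ?thesis by (simp add: P_def n_def)
qed


definition bO :: "complex \<Rightarrow> nat \<Rightarrow> (complex \<Rightarrow> real \<Rightarrow> complex) \<Rightarrow> bool" where
  "bO p n F \<longleftrightarrow> (\<exists>K. \<forall>\<^sub>F z in at p. \<forall>t\<in>{0..1}. norm (F z t) \<le> K * norm (z - p) ^ n)"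

definition uo :: "complex \<Rightarrow> (complex \<Rightarrow> real \<Rightarrow> complex) \<Rightarrow> bool" where
  "uo p F \<longleftrightarrow> (\<forall>e>0. \<forall>\<^sub>F z in at p. \<forall>t\<in>{0..1}. norm (F z t) \<le> e)"

lemma bOI: "(\<forall>\<^sub>F z in at p. \<forall>t\<in>{0..1}. norm (F z t) \<le> K * norm (z - p) ^ n) \<Longrightarrow> bO p n F"
  unfolding bO_def by blast

lemma bOE:
  assumes "bO p n F"
  obtains K where "K \<ge> 0" "\<forall>\<^sub>F z in at p. \<forall>t\<in>{0..1}. norm (F z t) \<le> K * norm (z - p) ^ n"
proof -
  from assms obtain K where K: "\<forall>\<^sub>F z in at p. \<forall>t\<in>{0..1}. norm (F z t) \<le> K * norm (z - p) ^ n"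
    by (auto simp: bO_def)
  have "\<forall>\<^sub>F z in at p. \<forall>t\<in>{0..1}. norm (F z t) \<le> max K 0 * norm (z - p) ^ n"
    using K
  proof eventually_elim
    case (elim z)
    show ?case
    proof
      fix t :: real assume "t \<in> {0..1}"
      then have "norm (F z t) \<le> K * norm (z - p) ^ n" using elim by auto
      also have "\<dots> \<le> max K 0 * norm (z - p) ^ n" by (rule mult_right_mono) auto
      finally show "norm (F z t) \<le> max K 0 * norm (z - p) ^ n" .
    qed
  qed
  then show ?thesis using that[of "max K 0"] by auto
qed

lemma bO_add:
  assumes "bO p n F" "bO p n G" shows "bO p n (\<lambda>z t. F z t + G z t)"
proof -
  obtain K1 where K1: "\<forall>\<^sub>F z in at p. \<forall>t\<in>{0..1}. norm (F z t) \<le> K1 * norm (z - p) ^ n"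
    using assms(1) bOE by blast
  obtain K2 where K2: "\<forall>\<^sub>F z in at p. \<forall>t\<in>{0..1}. norm (G z t) \<le> K2 * norm (z - p) ^ n"
    using assms(2) bOE by blast
  show ?thesis
  proof (rule bOI[where K="K1 + K2"])
    show "\<forall>\<^sub>F z in at p. \<forall>t\<in>{0..1}. norm (F z t + G z t) \<le> (K1 + K2) * norm (z - p) ^ n"
      using K1 K2
    proof eventually_elim
      case (elim z)
      show ?case
      proof
        fix t :: real assume t: "t \<in> {0..1}"
        have "norm (F z t + G z t) \<le> norm (F z t) + norm (G z t)" by (rule norm_triangle_ineq)
        also have "\<dots> \<le> K1 * norm (z - p) ^ n + K2 * norm (z - p) ^ n"
          using elim t by (intro add_mono) auto
        finally show "norm (F z t + G z t) \<le> (K1 + K2) * norm (z - p) ^ n"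
          by (simp add: distrib_right)
      qed
    qed
  qed
qed

lemma bO_uminus: "bO p n F \<Longrightarrow> bO p n (\<lambda>z t. - F z t)"
  by (simp add: bO_def)

lemma bO_diff:
  assumes "bO p n F" "bO p n G" shows "bO p n (\<lambda>z t. F z t - G z t)"
  using bO_add[OF assms(1) bO_uminus[OF assms(2)]] by simp

lemma bO_mult:
  assumes "bO p n F" "bO p m G" shows "bO p (n + m) (\<lambda>z t. F z t * G z t)"
proof -
  obtain K1 where K1: "K1 \<ge> 0" "\<forall>\<^sub>F z in at p. \<forall>t\<in>{0..1}. norm (F z t) \<le> K1 * norm (z - p) ^ n"
    using assms(1) bOE by blast
  obtain K2 where K2: "K2 \<ge> 0" "\<forall>\<^sub>F z in at p. \<forall>t\<in>{0..1}. norm (G z t) \<le> K2 * norm (z - p) ^ m"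
    using assms(2) bOE by blast
  show ?thesis
  proof (rule bOI[where K="K1 * K2"])
    show "\<forall>\<^sub>F z in at p. \<forall>t\<in>{0..1}. norm (F z t * G z t) \<le> (K1 * K2) * norm (z - p) ^ (n + m)"
      using K1(2) K2(2)
    proof eventually_elim
      case (elim z)
      show ?case
      proof
        fix t :: real assume t: "t \<in> {0..1}"
        have "norm (F z t * G z t) = norm (F z t) * norm (G z t)" by (rule norm_mult)
        also have "\<dots> \<le> (K1 * norm (z - p) ^ n) * (K2 * norm (z - p) ^ m)"
          using elim t K1(1) K2(1) by (intro mult_mono) auto
        finally show "norm (F z t * G z t) \<le> (K1 * K2) * norm (z - p) ^ (n + m)"
          by (simp add: power_add mult_ac)
      qed
    qed
  qed
qed

lemma bO_mono:
  assumes "m \<le> n" "bO p n F" shows "bO p m F"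
proof -
  obtain K where K: "K \<ge> 0" "\<forall>\<^sub>F z in at p. \<forall>t\<in>{0..1}. norm (F z t) \<le> K * norm (z - p) ^ n"
    using assms(2) bOE by blast
  have near: "\<forall>\<^sub>F z in at p. norm (z - p) \<le> 1"
    using eventually_at[of "\<lambda>z. norm (z - p) \<le> 1" p UNIV]
    by (auto intro!: exI[of _ 1] simp: dist_norm)
  show ?thesis
  proof (rule bOI[where K=K])
    show "\<forall>\<^sub>F z in at p. \<forall>t\<in>{0..1}. norm (F z t) \<le> K * norm (z - p) ^ m"
      using K(2) near
    proof eventually_elim
      case (elim z)
      have "norm (z - p) ^ n \<le> norm (z - p) ^ m"
        by (rule power_decreasing) (use assms(1) elim in auto)
      then have "K * norm (z - p) ^ n \<le> K * norm (z - p) ^ m" using K(1) by (rule mult_left_mono)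
      then show ?case using elim by (auto intro: order.trans)
    qed
  qed
qed

lemma bO_le:
  assumes "\<forall>\<^sub>F z in at p. \<forall>t\<in>{0..1}. norm (F z t) \<le> C * norm (G z t)" "bO p n G"
  shows "bO p n F"
proof -
  obtain K where K: "K \<ge> 0" "\<forall>\<^sub>F z in at p. \<forall>t\<in>{0..1}. norm (G z t) \<le> K * norm (z - p) ^ n"
    using assms(2) bOE by blast
  show ?thesis
  proof (rule bOI[where K="max C 0 * K"])
    show "\<forall>\<^sub>F z in at p. \<forall>t\<in>{0..1}. norm (F z t) \<le> (max C 0 * K) * norm (z - p) ^ n"
      using K(2) assms(1)
    proof eventually_elim
      case (elim z)
      show ?case
      proof
        fix t :: real assume t: "t \<in> {0..1}"
        have "norm (F z t) \<le> C * norm (G z t)" using elim t by auto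
        also have "\<dots> \<le> max C 0 * norm (G z t)" by (rule mult_right_mono) auto
        finally have "norm (F z t) \<le> max C 0 * norm (G z t)" .
        also have "\<dots> \<le> max C 0 * (K * norm (z - p) ^ n)"
          using elim t by (intro mult_left_mono) auto
        finally show "norm (F z t) \<le> (max C 0 * K) * norm (z - p) ^ n" by (simp add: mult_ac)
      qed
    qed
  qed
qed

lemma bO_cong:
  assumes "\<forall>\<^sub>F z in at p. \<forall>t\<in>{0..1}. F z t = G z t" "bO p n G"
  shows "bO p n F"
  by (rule bO_le[OF _ assms(2), where C=1]) (use assms(1) in \<open>eventually_elim, auto\<close>)

lemma bO_div:
  assumes "bO p n F" "c > 0" "\<forall>\<^sub>F z in at p. \<forall>t\<in>{0..1}. norm (G z t) \<ge> c"
  shows "bO p n (\<lambda>z t. F z t / G z t)"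
proof (rule bO_le[OF _ assms(1), where C="1/c"])
  show "\<forall>\<^sub>F z in at p. \<forall>t\<in>{0..1}. norm (F z t / G z t) \<le> 1 / c * norm (F z t)"
    using assms(3)
  proof eventually_elim
    case (elim z)
    show ?case
    proof
      fix t :: real assume t: "t \<in> {0..1}"
      have "c \<le> norm (G z t)" using elim t by auto
      then have "norm (F z t) / norm (G z t) \<le> norm (F z t) / c"
        using assms(2) by (intro divide_left_mono) (auto intro!: mult_pos_pos)
      then show "norm (F z t / G z t) \<le> 1 / c * norm (F z t)" by (simp add: norm_divide)
    qed
  qed
qed

lemma bO_t: "bO p n F \<Longrightarrow> bO p n (\<lambda>z t. of_real t * F z t)"
  by (rule bO_le[where C=1]) (auto simp: norm_mult intro!: always_eventually mult_left_le_one_le)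

lemma bO_const: "bO p 0 (\<lambda>z t. c)"
  by (rule bOI[where K="norm c"]) simp

lemma bO_pow: "bO p n (\<lambda>z t. (z - p) ^ n)"
  by (rule bOI[where K=1]) (simp add: norm_power)

lemma bO_cont:
  assumes "isCont g p" shows "bO p 0 (\<lambda>z t. g z)"
proof -
  have "\<forall>\<^sub>F z in at p. dist (g z) (g p) < 1"
    using assms unfolding isCont_def by (rule tendstoD) auto
  then have "\<forall>\<^sub>F z in at p. \<forall>t\<in>{0..1}. norm (g z) \<le> (norm (g p) + 1) * norm (z - p) ^ 0"
  proof eventually_elim
    case (elim z)
    then show ?case using norm_triangle_ineq2[of "g z" "g p"] by (auto simp: dist_norm)
  qed
  then show ?thesis by (rule bOI)
qed

lemma bO_uo:
  assumes "bO p (Suc n) F" shows "uo p F"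
  unfolding uo_def
proof (intro allI impI)
  fix e :: real assume e: "e > 0"
  obtain K where K: "K \<ge> 0" "\<forall>\<^sub>F z in at p. \<forall>t\<in>{0..1}. norm (F z t) \<le> K * norm (z - p) ^ Suc n"
    using assms bOE by blast
  have "\<forall>\<^sub>F z in at p. norm (z - p) < min 1 (e / (K + 1))"
    using eventually_at[of "\<lambda>z. norm (z - p) < min 1 (e / (K + 1))" p UNIV] e K(1)
    by (auto intro!: exI[of _ "min 1 (e / (K + 1))"] simp: dist_norm)
  with K(2) show "\<forall>\<^sub>F z in at p. \<forall>t\<in>{0..1}. norm (F z t) \<le> e"
  proof eventually_elim
    case (elim z)
    let ?x = "norm (z - p)"
    have "?x ^ Suc n \<le> ?x ^ 1" by (rule power_decreasing) (use elim in auto)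
    then have "K * ?x ^ Suc n \<le> K * ?x" using K(1) by (simp add: mult_left_mono)
    also have "\<dots> \<le> (K + 1) * (e / (K + 1))"
      using elim K(1) by (intro mult_mono) auto
    also have "\<dots> = e" using K(1) by simp
    finally show ?case using elim by (auto intro: order.trans)
  qed
qed

lemma uoD: "uo p F \<Longrightarrow> e > 0 \<Longrightarrow> \<forall>\<^sub>F z in at p. \<forall>t\<in>{0..1}. norm (F z t) \<le> e"
  by (simp add: uo_def)

lemma uo_le:
  assumes "\<forall>\<^sub>F z in at p. \<forall>t\<in>{0..1}. norm (F z t) \<le> C * norm (G z t)" "uo p G" "C > 0"
  shows "uo p F"
  unfolding uo_def
proof (intro allI impI)
  fix e :: real assume e: "e > 0"
  have "\<forall>\<^sub>F z in at p. \<forall>t\<in>{0..1}. norm (G z t) \<le> e / C" using assms(2,3) e uoD by auto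
  with assms(1) show "\<forall>\<^sub>F z in at p. \<forall>t\<in>{0..1}. norm (F z t) \<le> e"
  proof eventually_elim
    case (elim z)
    show ?case
    proof
      fix t :: real assume t: "t \<in> {0..1}"
      have "norm (F z t) \<le> C * norm (G z t)" using elim t by auto
      also have "\<dots> \<le> C * (e / C)" using elim t assms(3) by (intro mult_left_mono) auto
      finally show "norm (F z t) \<le> e" using assms(3) by simp
    qed
  qed
qed

lemma uo_add:
  assumes "uo p F" "uo p G" shows "uo p (\<lambda>z t. F z t + G z t)"
  unfolding uo_def
proof (intro allI impI)
  fix e :: real assume e: "e > 0"
  have "\<forall>\<^sub>F z in at p. \<forall>t\<in>{0..1}. norm (F z t) \<le> e/2" "\<forall>\<^sub>F z in at p. \<forall>t\<in>{0..1}. norm (G z t) \<le> e/2"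
    using uoD[OF assms(1), of "e/2"] uoD[OF assms(2), of "e/2"] e by auto
  then show "\<forall>\<^sub>F z in at p. \<forall>t\<in>{0..1}. norm (F z t + G z t) \<le> e"
  proof eventually_elim
    case (elim z)
    show ?case
    proof
      fix t :: real assume "t \<in> {0..1}"
      then show "norm (F z t + G z t) \<le> e" using elim norm_triangle_ineq[of "F z t" "G z t"] by force
    qed
  qed
qed

lemma uo_mult:
  assumes "uo p F" "bO p 0 G" shows "uo p (\<lambda>z t. F z t * G z t)"
  unfolding uo_def
proof (intro allI impI)
  fix e :: real assume e: "e > 0"
  obtain K where K: "K \<ge> 0" "\<forall>\<^sub>F z in at p. \<forall>t\<in>{0..1}. norm (G z t) \<le> K * norm (z - p) ^ 0"
    using assms(2) bOE by blast
  have "\<forall>\<^sub>F z in at p. \<forall>t\<in>{0..1}. norm (F z t) \<le> e / (K + 1)" using uoD[OF assms(1), of "e/(K+1)"] e K(1) by auto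
  with K(2) show "\<forall>\<^sub>F z in at p. \<forall>t\<in>{0..1}. norm (F z t * G z t) \<le> e"
  proof eventually_elim
    case (elim z)
    show ?case
    proof
      fix t :: real assume t: "t \<in> {0..1}"
      have "norm (G z t) \<le> K + 1" using elim t by force
      moreover have "0 \<le> e / (K + 1)" using e K(1) by simp
      ultimately have "norm (F z t * G z t) \<le> (e / (K + 1)) * (K + 1)"
        unfolding norm_mult using elim t K(1) by (intro mult_mono) auto
      then show "norm (F z t * G z t) \<le> e" using K(1) by simp
    qed
  qed
qed

lemma uo_bO0: assumes "uo p F" shows "bO p 0 F"
proof -
  have "\<forall>\<^sub>F z in at p. \<forall>t\<in>{0..1}. norm (F z t) \<le> 1" using uoD[OF assms, of 1] by simp
  then show ?thesis by (intro bOI[where K=1]) simp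
qed


locale bset =
  fixes f :: "complex \<Rightarrow> complex" and U :: "complex set" and p :: complex
  assumes U_open: "open U" and U_convex: "convex U" and holf: "f holomorphic_on U"
    and re: "\<And>z. z \<in> U \<Longrightarrow> Re (deriv f z) > 0" and pU: "p \<in> U" and fp: "f p = p"
    and iso: "\<forall>\<^sub>F z in at p. f z \<noteq> z"
begin

definition "h z = f z - z"
definition "wz z t = z + of_real t * h z"
definition "Phi z t = buff_form f (wz z t) * h z"
definition "lam = deriv f p"
definition "R z t = h (wz z t) / h z"
definition "mm = min 1 (Re lam)"
definition "G z = -1 + integral {0..1} (Phi z)"

lemma f_deriv: "z \<in> U \<Longrightarrow> (f has_field_derivative deriv f z) (at z within T)"
  using holomorphic_derivI[OF holf U_open] by blast

lemma f_cont: "z \<in> U \<Longrightarrow> isCont f z"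
  using f_deriv[of z UNIV] DERIV_isCont by blast

lemma df_holo: "deriv f holomorphic_on U"
  using holomorphic_deriv[OF holf U_open] .

lemma df_cont: "z \<in> U \<Longrightarrow> isCont (deriv f) z"
  using holomorphic_on_imp_continuous_on[OF df_holo] U_open
  by (simp add: continuous_on_eq_continuous_at)

lemma h_deriv: "z \<in> U \<Longrightarrow> (h has_field_derivative (deriv f z - 1)) (at z within T)"
  unfolding h_def[abs_def] by (auto intro!: derivative_eq_intros f_deriv)

lemma h_p: "h p = 0" by (simp add: h_def fp)

lemma h_tendsto: "(h \<longlongrightarrow> 0) (at p)"
proof -
  have "isCont h p" using f_cont[OF pU] unfolding h_def[abs_def] by (intro continuous_intros)
  then show ?thesis using h_p by (metis isCont_def)
qed

lemma ev_near: "d > 0 \<Longrightarrow> \<forall>\<^sub>F z in at p. norm (z - p) < d"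
  using eventually_at[of "\<lambda>z. norm (z - p) < d" p UNIV] by (auto simp: dist_norm)

lemma wz_near:
  assumes "d > 0" shows "\<forall>\<^sub>F z in at p. \<forall>t\<in>{0..1}. wz z t \<in> ball p d \<and> z \<in> ball p d"
proof -
  have "\<forall>\<^sub>F z in at p. norm (h z) < d/2"
    using tendstoD[OF h_tendsto, of "d/2"] assms by (simp add: dist_norm)
  moreover have "\<forall>\<^sub>F z in at p. norm (z - p) < d/2" using ev_near[of "d/2"] assms by simp
  ultimately show ?thesis
  proof eventually_elim
    case (elim z)
    show ?case
    proof
      fix t :: real assume t: "t \<in> {0..1}"
      have "norm (of_real t * h z) \<le> norm (h z)"
        using t by (auto simp: norm_mult intro!: mult_left_le_one_le)
      then have "norm (wz z t - p) \<le> norm (z - p) + norm (h z)"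
        unfolding wz_def using norm_triangle_ineq[of "z - p" "of_real t * h z"]
        by (simp add: algebra_simps)
      moreover have "norm (h z) \<ge> 0" "norm (z - p) \<ge> 0" by auto
      ultimately have "norm (wz z t - p) < d" "norm (z - p) < d" using elim by linarith+
      then show "wz z t \<in> ball p d \<and> z \<in> ball p d"
        by (auto simp: dist_norm norm_minus_commute)
    qed
  qed
qed

lemma R_lim: "uo p (\<lambda>z t. R z t - (1 + of_real t * (lam - 1)))"
  unfolding uo_def
proof (intro allI impI)
  fix e :: real assume e: "e > 0"
  obtain d0 where d0: "d0 > 0" "ball p d0 \<subseteq> U"
    using U_open pU open_contains_ball by blast
  obtain d1 where d1: "d1 > 0" "\<And>s. dist s p < d1 \<Longrightarrow> dist (deriv f s) lam < e"
    using df_cont[OF pU] e unfolding continuous_at_eps_delta lam_def by blast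
  define d where "d = min d0 d1"
  have d: "d > 0" "ball p d \<subseteq> U" "\<And>s. s \<in> ball p d \<Longrightarrow> norm (deriv f s - lam) \<le> e"
    using d0 d1 by (auto simp: d_def dist_norm norm_minus_commute intro: less_imp_le)
  show "\<forall>\<^sub>F z in at p. \<forall>t\<in>{0..1}. norm (R z t - (1 + of_real t * (lam - 1))) \<le> e"
    using wz_near[OF d(1)] iso
  proof eventually_elim
    case (elim z)
    show ?case
    proof
      fix t :: real assume t: "t \<in> {0..1}"
      have hz: "h z \<noteq> 0" using elim by (simp add: h_def)
      define H where "H s = f s - lam * s" for s
      have dH: "(H has_field_derivative (deriv f s - lam)) (at s within ball p d)" if "s \<in> ball p d" for s
        unfolding H_def[abs_def] using that d(2)
        by (auto intro!: derivative_eq_intros f_deriv)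
      have "norm (H (wz z t) - H z) \<le> e * norm (wz z t - z)"
        by (rule field_differentiable_bound[OF convex_ball dH d(3)]) (use elim t in auto)
      also have "norm (wz z t - z) \<le> norm (h z)"
        using t by (auto simp: wz_def norm_mult intro!: mult_left_le_one_le)
      finally have *: "norm (H (wz z t) - H z) \<le> e * norm (h z)"
        using e by (simp add: mult_left_mono)
      have e1: "H (wz z t) - H z = h (wz z t) - h z - of_real t * (lam - 1) * h z"
        by (simp add: H_def h_def wz_def algebra_simps)
      have "R z t - (1 + of_real t * (lam - 1)) = (h (wz z t) - h z - of_real t * (lam - 1) * h z) / h z"
        using hz by (simp add: R_def field_simps)
      then have "R z t - (1 + of_real t * (lam - 1)) = (H (wz z t) - H z) / h z"
        using e1 by simp
      then have "norm (R z t - (1 + of_real t * (lam - 1))) = norm (H (wz z t) - H z) / norm (h z)"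
        by (simp add: norm_divide)
      also have "\<dots> \<le> e" using * hz by (simp add: divide_le_eq)
      finally show "norm (R z t - (1 + of_real t * (lam - 1))) \<le> e" .
    qed
  qed
qed

end

context bset begin

definition "Ofp = {s \<in> U. f s \<noteq> s}"
definition "Dd t = 1 + of_real t * (lam - 1)"
definition "Phi0 t = buff_factor lam / Dd t"

lemma lam_re: "Re lam > 0" using re[OF pU] by (simp add: lam_def)
lemma mm_pos: "mm > 0" using lam_re by (simp add: mm_def)

lemma D_lb: assumes "t \<in> {0..1}" shows "norm (Dd t) \<ge> mm"
proof -
  have e: "Re (Dd t) = (1 - t) * 1 + t * Re lam" by (simp add: Dd_def algebra_simps)
  have "(1 - t) * mm \<le> (1 - t) * 1" using assms by (intro mult_left_mono) (auto simp: mm_def)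
  moreover have "t * mm \<le> t * Re lam" using assms by (intro mult_left_mono) (auto simp: mm_def)
  ultimately have "Re (Dd t) \<ge> (1 - t) * mm + t * mm" unfolding e by linarith
  then have "Re (Dd t) \<ge> mm" by (simp add: algebra_simps)
  then show ?thesis using complex_Re_le_cmod[of "Dd t"] by linarith
qed

lemma D_bO: "bO p 0 (\<lambda>z t. Dd t)"
proof -
  have "\<forall>\<^sub>F z in at p. \<forall>t\<in>{0..1}. norm (Dd t) \<le> (1 + norm (lam - 1)) * norm (z - p) ^ 0"
  proof (intro always_eventually allI ballI)
    fix z :: complex and t :: real assume t: "t \<in> {0..1}"
    have "norm (Dd t) \<le> 1 + norm (of_real t * (lam - 1))"
      unfolding Dd_def using norm_triangle_ineq[of 1 "of_real t * (lam - 1)"] by simp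
    also have "norm (of_real t * (lam - 1)) \<le> norm (lam - 1)"
      using t by (auto simp: norm_mult intro!: mult_left_le_one_le)
    finally show "norm (Dd t) \<le> (1 + norm (lam - 1)) * norm (z - p) ^ 0" by simp
  qed
  then show ?thesis by (rule bOI)
qed

lemma R_lb: "\<forall>\<^sub>F z in at p. \<forall>t\<in>{0..1}. norm (R z t) \<ge> mm/2"
proof -
  have ev: "\<forall>\<^sub>F z in at p. \<forall>t\<in>{0..1}. norm (R z t - (1 + of_real t * (lam - 1))) \<le> mm/2"
    by (rule uoD[OF R_lim]) (use mm_pos in simp)
  show ?thesis using ev
proof eventually_elim
  case (elim z)
  show ?case
  proof
    fix t :: real assume t: "t \<in> {0..1}"
    have "norm (R z t - Dd t) \<le> mm/2" using elim t by (simp add: Dd_def)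
    moreover have "norm (Dd t) \<ge> mm" using D_lb t .
    moreover have "norm (Dd t) \<le> norm (R z t) + norm (R z t - Dd t)"
      using norm_triangle_ineq[of "R z t" "Dd t - R z t"] by (simp add: norm_minus_commute)
    ultimately show "norm (R z t) \<ge> mm/2" by linarith
  qed
qed
qed

definition "good z \<longleftrightarrow> z \<noteq> p \<and> f z \<noteq> z \<and> z \<in> U \<and>
   (\<forall>t\<in>{0..1}. wz z t \<in> U \<and> f (wz z t) \<noteq> wz z t \<and> norm (R z t) \<ge> mm/2)"

lemma good_ev: "\<forall>\<^sub>F z in at p. good z"
proof -
  obtain d0 where d0: "d0 > 0" "ball p d0 \<subseteq> U"
    using U_open pU open_contains_ball by blast
  have np: "\<forall>\<^sub>F z in at p. z \<noteq> p" by (simp add: eventually_at_filter)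
  show ?thesis
    using wz_near[OF d0(1)] R_lb iso np
  proof eventually_elim
    case (elim z)
    have hz: "h z \<noteq> 0" using elim by (simp add: h_def)
    have zU: "z \<in> U" using elim(1)[rule_format, of 0] d0 by auto
    have "wz z t \<in> U \<and> f (wz z t) \<noteq> wz z t \<and> norm (R z t) \<ge> mm/2" if t: "t \<in> {0..1}" for t
    proof (intro conjI)
      show "wz z t \<in> U" using elim t d0 by auto
      show "norm (R z t) \<ge> mm/2" using elim t by auto
      then have "R z t \<noteq> 0" using mm_pos by auto
      then show "f (wz z t) \<noteq> wz z t" by (auto simp: R_def h_def)
    qed
    then show ?case unfolding good_def using zU elim(3) elim(4) by blast
  qed
qed

lemma good_hw: "good z \<Longrightarrow> t \<in> {0..1} \<Longrightarrow> h (wz z t) \<noteq> 0 \<and> h z \<noteq> 0"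
  by (auto simp: good_def h_def)

lemma Phi_eq: "good z \<Longrightarrow> t \<in> {0..1} \<Longrightarrow> Phi z t = buff_factor (deriv f (wz z t)) / R z t"
proof -
  assume "good z" "t \<in> {0..1}"
  then have a: "h (wz z t) \<noteq> 0" "h z \<noteq> 0" using good_hw by auto
  have "Phi z t = buff_factor (deriv f (wz z t)) / h (wz z t) * h z"
    by (simp add: Phi_def buff_form_def h_def)
  also have "\<dots> = buff_factor (deriv f (wz z t)) / R z t"
    by (simp only: R_def divide_divide_eq_right times_divide_eq_left)
  finally show ?thesis .
qed

lemma bf_cont_lam: "isCont buff_factor lam"
proof -
  have "continuous_on {w. Re w > 0} buff_factor"
    using buff_factor_holo by (rule holomorphic_on_imp_continuous_on)
  then show ?thesis using lam_re open_halfspace_Re_gt[of 0]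
    by (simp add: continuous_on_eq_continuous_at)
qed

lemma A_lim: "uo p (\<lambda>z t. buff_factor (deriv f (wz z t)) - buff_factor lam)"
  unfolding uo_def
proof (intro allI impI)
  fix e :: real assume e: "e > 0"
  have "isCont (\<lambda>s. buff_factor (deriv f s)) p"
    using continuous_at_compose[OF df_cont[OF pU], of buff_factor] bf_cont_lam
    by (simp add: lam_def o_def)
  then obtain d where d: "d > 0" "\<And>s. dist s p < d \<Longrightarrow> dist (buff_factor (deriv f s)) (buff_factor lam) < e"
    using e unfolding continuous_at_eps_delta lam_def by blast
  show "\<forall>\<^sub>F z in at p. \<forall>t\<in>{0..1}. norm (buff_factor (deriv f (wz z t)) - buff_factor lam) \<le> e"
    using wz_near[OF d(1)]
  proof eventually_elim
    case (elim z)
    show ?case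
    proof
      fix t :: real assume "t \<in> {0..1}"
      then have "dist (wz z t) p < d" using elim by (auto simp: dist_commute)
      then show "norm (buff_factor (deriv f (wz z t)) - buff_factor lam) \<le> e"
        using d(2) by (auto simp: dist_norm intro: less_imp_le)
    qed
  qed
qed

lemma Phi_lim: "uo p (\<lambda>z t. Phi z t - Phi0 t)"
proof -
  define N where "N z t = (buff_factor (deriv f (wz z t)) - buff_factor lam) * Dd t
      + (R z t - Dd t) * (- buff_factor lam)" for z t
  have "uo p N"
    unfolding N_def
    by (intro uo_add uo_mult A_lim D_bO bO_const) (use R_lim in \<open>simp add: Dd_def\<close>)
  moreover have "\<forall>\<^sub>F z in at p. \<forall>t\<in>{0..1}. norm (Phi z t - Phi0 t) \<le> (1 / (mm/2 * mm)) * norm (N z t)"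
    using good_ev
  proof eventually_elim
    case (elim z)
    show ?case
    proof
      fix t :: real assume t: "t \<in> {0..1}"
      have R: "norm (R z t) \<ge> mm/2" using elim t by (auto simp: good_def)
      have D: "norm (Dd t) \<ge> mm" using D_lb t .
      have R0: "R z t \<noteq> 0" and D0: "Dd t \<noteq> 0" using R D mm_pos by auto
      have "Phi z t - Phi0 t = N z t / (R z t * Dd t)"
      proof -
        have "Phi z t - Phi0 t = buff_factor (deriv f (wz z t)) / R z t - buff_factor lam / Dd t"
          by (simp add: Phi_eq[OF elim t] Phi0_def)
        also have "\<dots> = (buff_factor (deriv f (wz z t)) * Dd t - buff_factor lam * R z t) / (R z t * Dd t)"
          using R0 D0 by (rule diff_frac_eq)
        also have "buff_factor (deriv f (wz z t)) * Dd t - buff_factor lam * R z t = N z t"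
          by (simp add: N_def algebra_simps)
        finally show ?thesis .
      qed
      then have "norm (Phi z t - Phi0 t) = norm (N z t) / (norm (R z t) * norm (Dd t))"
        by (simp add: norm_divide norm_mult)
      also have "\<dots> \<le> norm (N z t) / (mm/2 * mm)"
        using R D mm_pos by (intro divide_left_mono mult_mono) (auto intro!: mult_pos_pos)
      finally show "norm (Phi z t - Phi0 t) \<le> (1 / (mm/2 * mm)) * norm (N z t)" by (simp add: ac_simps)
    qed
  qed
  ultimately show ?thesis
    using uo_le[where C="1 / (mm/2 * mm)"] mm_pos by auto
qed

end

context bset begin

lemma D_notnp: "t \<in> {0..1} \<Longrightarrow> Dd t \<notin> \<real>\<^sub>\<le>\<^sub>0"
proof -
  assume t: "t \<in> {0..1}"
  have e: "Re (Dd t) = (1 - t) * 1 + t * Re lam" by (simp add: Dd_def algebra_simps)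
  have "(1 - t) * mm \<le> (1 - t) * 1" using t by (intro mult_left_mono) (auto simp: mm_def)
  moreover have "t * mm \<le> t * Re lam" using t by (intro mult_left_mono) (auto simp: mm_def)
  ultimately have "Re (Dd t) \<ge> (1 - t) * mm + t * mm" unfolding e by linarith
  then have "Re (Dd t) > 0" using mm_pos by (simp add: algebra_simps)
  then show ?thesis by (auto simp: nonpos_Reals_def)
qed

lemma int_Phi0: "(Phi0 has_integral 1) {0..1}"
proof (cases "lam = 1")
  case True
  then have "Phi0 = (\<lambda>t. 1)" by (auto simp: Phi0_def Dd_def buff_factor_def)
  then show ?thesis using has_integral_const_real[of "1::complex" 0 1] by simp
next
  case False
  have L0: "Ln lam \<noteq> 0" using False lam_re Ln_zero_imp by blast
  define F where "F x = Ln (1 + x * (lam - 1)) / Ln lam" for x :: complex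
  have der: "(F has_field_derivative Phi0 t) (at (of_real t))" if t: "t \<in> {0..1}" for t
  proof -
    have np: "1 + of_real t * (lam - 1) \<notin> \<real>\<^sub>\<le>\<^sub>0" using D_notnp[OF t] by (simp add: Dd_def)
    have "((\<lambda>x. 1 + x * (lam - 1)) has_field_derivative (lam - 1)) (at (of_real t))"
      by (auto intro!: derivative_eq_intros)
    from DERIV_chain2[OF has_field_derivative_Ln[OF np] this]
    have "((\<lambda>x. Ln (1 + x * (lam - 1))) has_field_derivative inverse (1 + of_real t * (lam - 1)) * (lam - 1)) (at (of_real t))"
      by simp
    from DERIV_cdivide[OF this, of "Ln lam"]
    show ?thesis
      unfolding F_def Phi0_def Dd_def buff_factor_def using False by (simp add: field_simps)
  qed
  have "((\<lambda>t. Phi0 t) has_integral (F (of_real 1) - F (of_real 0))) {0..1}"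
    by (rule fundamental_theorem_of_calculus) (auto intro!: has_vector_derivative_real_field der)
  moreover have "F (of_real 1) - F (of_real 0) = 1" using L0 by (simp add: F_def)
  ultimately show ?thesis by simp
qed

lemma Ofp_open: "open Ofp"
proof -
  have "continuous_on U (\<lambda>s. f s - s)"
    using holomorphic_on_imp_continuous_on[OF holf] by (intro continuous_intros)
  from continuous_open_preimage[OF this U_open open_Compl[OF closed_singleton[of 0]]]
  have "open (U \<inter> (\<lambda>s. f s - s) -` (- {0}))" .
  moreover have "U \<inter> (\<lambda>s. f s - s) -` (- {0}) = Ofp" by (auto simp: Ofp_def)
  ultimately show ?thesis by simp
qed

lemma bf_holo: "buff_form f holomorphic_on Ofp"
proof -
  have "(buff_factor \<circ> deriv f) holomorphic_on Ofp"
    by (rule holomorphic_on_compose_gen[OF holomorphic_on_subset[OF df_holo] buff_factor_holo])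
       (use re in \<open>auto simp: Ofp_def\<close>)
  then have "(\<lambda>s. buff_factor (deriv f s) / (f s - s)) holomorphic_on Ofp"
    using holomorphic_on_subset[OF holf, of Ofp]
    by (intro holomorphic_intros) (auto simp: Ofp_def o_def)
  then show ?thesis by (simp add: buff_form_def[abs_def])
qed

lemma bf_cont: "continuous_on Ofp (buff_form f)"
  using bf_holo holomorphic_on_imp_continuous_on by blast

lemma good_Ofp: "good z \<Longrightarrow> t \<in> {0..1} \<Longrightarrow> wz z t \<in> Ofp"
  by (auto simp: good_def Ofp_def)

lemma Phi_cont: assumes "good z" shows "continuous_on {0..1} (Phi z)"
proof -
  have "continuous_on {0..1} (\<lambda>t. wz z t)" unfolding wz_def by (intro continuous_intros)
  then have "continuous_on {0..1} (\<lambda>t. buff_form f (wz z t))"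
    by (rule continuous_on_compose2[OF bf_cont]) (use good_Ofp[OF assms] in auto)
  then show ?thesis unfolding Phi_def[abs_def] by (intro continuous_intros)
qed

lemma G_lim: "(G \<longlongrightarrow> 0) (at p)"
proof (rule tendstoI)
  fix e :: real assume e: "e > 0"
  have ev: "\<forall>\<^sub>F z in at p. \<forall>t\<in>{0..1}. norm (Phi z t - Phi0 t) \<le> e/2"
    by (rule uoD[OF Phi_lim]) (use e in simp)
  show "\<forall>\<^sub>F z in at p. dist (G z) 0 < e"
    using ev good_ev
  proof eventually_elim
    case (elim z)
    have i1: "Phi z integrable_on {0..1}"
      using Phi_cont[OF elim(2)] by (rule integrable_continuous_interval)
    have i2: "Phi0 integrable_on {0..1}" using int_Phi0 by blast
    have "G z = integral {0..1} (Phi z) - integral {0..1} Phi0"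
      using int_Phi0 by (simp add: G_def integral_unique)
    also have "\<dots> = integral {0..1} (\<lambda>t. Phi z t - Phi0 t)"
      using i1 i2 by (simp add: integral_diff)
    finally have "G z = integral {0..1} (\<lambda>t. Phi z t - Phi0 t)" .
    moreover have "norm (integral {0..1} (\<lambda>t. Phi z t - Phi0 t)) \<le> integral {0..1} (\<lambda>t::real. e/2)"
      by (rule Henstock_Kurzweil_Integration.integral_norm_bound_integral)
         (use i1 i2 elim(1) in \<open>auto intro: integrable_diff\<close>)
    ultimately have "norm (G z) \<le> e/2" by simp
    then show ?case using e by simp
  qed
qed

end

lemma cont_fst: "continuous_on A g \<Longrightarrow> fst ` T \<subseteq> A \<Longrightarrow> continuous_on T (\<lambda>y. g (fst y))"
  by (rule continuous_on_compose2[OF _ continuous_on_fst[OF continuous_on_id]]) auto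

context bset begin

lemma buff_u_G: "buff_u f z = G z"
proof -
  have "linepath z (f z) x = wz z x" for x
    by (simp add: linepath_def wz_def h_def scaleR_conv_of_real algebra_simps)
  then show ?thesis
    by (simp add: buff_u_def G_def contour_integral_integral Phi_def[abs_def] h_def)
qed

lemma G_holo:
  obtains r where "r > 0" "\<And>z. z \<in> ball p r - {p} \<Longrightarrow> good z" "G holomorphic_on (ball p r - {p})"
proof -
  obtain r where r: "r > 0" "\<And>x. x \<noteq> p \<Longrightarrow> dist x p < r \<Longrightarrow> good x"
    using good_ev unfolding eventually_at by auto
  have gS: "good z" if "z \<in> ball p r - {p}" for z
    using that r(2) by (auto simp: dist_commute)
  define S where "S = ball p r - {p}"
  have Sopen: "open S" unfolding S_def by auto
  define Phi' where "Phi' x t = deriv (buff_form f) (wz x t) * (1 + of_real t * (deriv f x - 1)) * h x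
      + (deriv f x - 1) * buff_form f (wz x t)" for x t
  have "\<exists>f'. (G has_field_derivative f') (at z0)" if z0: "z0 \<in> S" for z0
  proof -
    obtain e where e: "e > 0" "ball z0 e \<subseteq> S" using Sopen z0 open_contains_ball by blast
    have gB: "good x" if "x \<in> ball z0 e" for x
    proof -
      have "x \<in> ball p r - {p}" using e(2) that unfolding S_def by blast
      then show ?thesis by (rule gS)
    qed
    have xU: "x \<in> U" if "x \<in> ball z0 e" for x using gB[OF that] by (simp add: good_def)
    have fx: "((\<lambda>x. Phi x t) has_field_derivative Phi' x t) (at x within ball z0 e)"
      if x: "x \<in> ball z0 e" and t: "t \<in> cbox 0 1" for x t
    proof -
      have t': "t \<in> {0..1}" using t by simp
      have dw: "((\<lambda>x. wz x t) has_field_derivative (1 + of_real t * (deriv f x - 1))) (at x)"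
        unfolding wz_def[abs_def] using h_deriv[OF xU[OF x], of UNIV]
        by (auto intro!: derivative_eq_intros)
      have dbf: "(buff_form f has_field_derivative deriv (buff_form f) (wz x t)) (at (wz x t))"
        by (rule holomorphic_derivI[OF bf_holo Ofp_open good_Ofp[OF gB[OF x] t']])
      have "((\<lambda>x. buff_form f (wz x t) * h x) has_field_derivative Phi' x t) (at x)"
        unfolding Phi'_def using DERIV_mult[OF DERIV_chain2[OF dbf dw] h_deriv[OF xU[OF x], of UNIV]]
        by simp
      then show ?thesis unfolding Phi_def by (rule has_field_derivative_at_within)
    qed
    have int: "Phi x integrable_on cbox 0 1" if "x \<in> ball z0 e" for x
      using integrable_continuous_interval[OF Phi_cont[OF gB[OF that]]] by simp
    define T where "T = ball z0 e \<times> cbox (0::real) 1"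
    have fstT: "fst ` T \<subseteq> U" using xU by (auto simp: T_def)
    have c_f: "continuous_on T (\<lambda>y. f (fst y))"
      by (rule cont_fst[OF holomorphic_on_imp_continuous_on[OF holf] fstT])
    have c_df: "continuous_on T (\<lambda>y. deriv f (fst y))"
      by (rule cont_fst[OF holomorphic_on_imp_continuous_on[OF df_holo] fstT])
    have c_wz: "continuous_on T (\<lambda>y. wz (fst y) (snd y))"
      unfolding wz_def h_def using c_f by (intro continuous_intros)
    have wzO: "(\<lambda>y. wz (fst y) (snd y)) ` T \<subseteq> Ofp"
      using good_Ofp gB by (auto simp: T_def)
    have c_bf: "continuous_on T (\<lambda>y. buff_form f (wz (fst y) (snd y)))"
      by (rule continuous_on_compose2[OF bf_cont c_wz wzO])
    have c_dbf: "continuous_on T (\<lambda>y. deriv (buff_form f) (wz (fst y) (snd y)))"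
      by (rule continuous_on_compose2[OF holomorphic_on_imp_continuous_on[OF holomorphic_deriv[OF bf_holo Ofp_open]] c_wz wzO])
    have cont: "continuous_on T (\<lambda>(x, t). Phi' x t)"
      unfolding case_prod_unfold Phi'_def h_def using c_f c_df c_bf c_dbf
      by (intro continuous_intros)
    have "((\<lambda>x. integral (cbox 0 1) (Phi x)) has_field_derivative integral (cbox 0 1) (Phi' z0))
        (at z0 within ball z0 e)"
      by (rule leibniz_rule_field_derivative[OF fx int cont[unfolded T_def]]) (use e in auto)
    then have "((\<lambda>x. integral (cbox 0 1) (Phi x)) has_field_derivative integral (cbox 0 1) (Phi' z0)) (at z0)"
      using at_within_open[of z0 "ball z0 e"] e by simp
    then have "(G has_field_derivative integral (cbox 0 1) (Phi' z0)) (at z0)"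
      unfolding G_def[abs_def] by (auto intro!: derivative_eq_intros)
    then show ?thesis by blast
  qed
  then have "G holomorphic_on S" using holomorphic_on_open[OF Sopen] by blast
  then show ?thesis using that r(1) gS by (simp add: S_def)
qed

definition "gg z = (if z = p then 0 else G z)"

lemma gg_holo: obtains r where "r > 0" "gg holomorphic_on ball p r" "\<And>z. z \<in> ball p r - {p} \<Longrightarrow> good z"
proof -
  obtain r where r: "r > 0" "\<And>z. z \<in> ball p r - {p} \<Longrightarrow> good z" "G holomorphic_on (ball p r - {p})"
    using G_holo by blast
  have H: "gg holomorphic_on (ball p r - {p})"
    using r(3) by (rule holomorphic_transform) (auto simp: gg_def)
  have L: "(gg \<longlongrightarrow> gg z) (at z within ball p r)" if "z \<in> {p}" for z
  proof -
    have "(gg \<longlongrightarrow> 0) (at p)"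
      using G_lim by (rule Lim_transform_eventually) (auto simp: gg_def eventually_at_filter)
    then show ?thesis using that by (auto simp: gg_def intro: tendsto_within_subset)
  qed
  have "gg holomorphic_on ball p r"
    by (rule no_isolated_singularity'[OF L H]) auto
  then show ?thesis using that r by blast
qed

end

locale bpar = bset +
  fixes k :: nat and e :: "complex \<Rightarrow> complex" and r1 :: real
  assumes r1: "r1 > 0" and r1U: "ball p r1 \<subseteq> U" and eholo: "e holomorphic_on ball p r1"
    and ep: "e p \<noteq> 0" and hform: "\<And>w. w \<in> ball p r1 \<Longrightarrow> f w - w = (w - p) ^ Suc (Suc k) * e w"
begin

definition "h1 z = deriv f z - 1"
definition "h2 z = deriv (deriv f) z"
definition "h3 z = deriv (deriv (deriv f)) z"
definition "e1 = deriv e"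
definition "e2 = deriv (deriv e)"

lemma e_der: "z \<in> ball p r1 \<Longrightarrow> (e has_field_derivative e1 z) (at z within T)"
  unfolding e1_def by (rule holomorphic_derivI[OF eholo open_ball])

lemma e1_holo: "e1 holomorphic_on ball p r1"
  unfolding e1_def by (rule holomorphic_deriv[OF eholo open_ball])

lemma e1_der: "z \<in> ball p r1 \<Longrightarrow> (e1 has_field_derivative e2 z) (at z within T)"
  unfolding e2_def e1_def[symmetric] by (rule holomorphic_derivI[OF e1_holo open_ball])

lemma e2_holo: "e2 holomorphic_on ball p r1"
  unfolding e2_def e1_def[symmetric] by (rule holomorphic_deriv[OF e1_holo open_ball])

lemma cont_at_p: "g holomorphic_on ball p r1 \<Longrightarrow> isCont g p"
  using holomorphic_on_imp_continuous_on[of g "ball p r1"] r1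
  by (simp add: continuous_on_eq_continuous_at)

lemma pow_der: "((\<lambda>w. (w - p) ^ Suc n) has_field_derivative of_nat (Suc n) * (z - p) ^ n) (at z within T)"
  apply (rule derivative_eq_intros refl)+
  apply (cases n)
   apply (auto simp: algebra_simps)
  done

lemma h_on_ball: "w \<in> ball p r1 \<Longrightarrow> h w = (w - p) ^ Suc (Suc k) * e w"
  using hform by (simp add: h_def)

lemma h1_form:
  assumes z: "z \<in> ball p r1"
  shows "h1 z = of_nat (Suc (Suc k)) * (z - p) ^ Suc k * e z + (z - p) ^ Suc (Suc k) * e1 z"
proof -
  have zU: "z \<in> U" using z r1U by auto
  have d1: "((\<lambda>w. (w - p) ^ Suc (Suc k) * e w) has_field_derivative
      (of_nat (Suc (Suc k)) * (z - p) ^ Suc k * e z + (z - p) ^ Suc (Suc k) * e1 z)) (at z)"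
  proof -
    have "((\<lambda>w. (w - p) ^ Suc (Suc k) * e w) has_field_derivative
      (of_nat (Suc (Suc k)) * (z - p) ^ Suc k) * e z + e1 z * (z - p) ^ Suc (Suc k)) (at z)"
      by (rule DERIV_mult[OF pow_der e_der[OF z]])
    then show ?thesis by (simp add: algebra_simps)
  qed
  have d2: "(h has_field_derivative h1 z) (at z)" unfolding h1_def by (rule h_deriv[OF zU])
  have "((\<lambda>w. (w - p) ^ Suc (Suc k) * e w) has_field_derivative h1 z) (at z)"
    by (rule has_field_derivative_transform_within_open[OF d2 open_ball z]) (simp add: h_on_ball)
  then show ?thesis using d1 DERIV_unique by blast
qed

lemma h2_form:
  assumes z: "z \<in> ball p r1"
  shows "h2 z = of_nat (Suc (Suc k)) * of_nat (Suc k) * (z - p) ^ k * e z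
     + 2 * of_nat (Suc (Suc k)) * (z - p) ^ Suc k * e1 z + (z - p) ^ Suc (Suc k) * e2 z"
proof -
  have zU: "z \<in> U" using z r1U by auto
  have d1: "((\<lambda>w. of_nat (Suc (Suc k)) * (w - p) ^ Suc k * e w + (w - p) ^ Suc (Suc k) * e1 w) has_field_derivative
      (of_nat (Suc (Suc k)) * of_nat (Suc k) * (z - p) ^ k * e z
     + 2 * of_nat (Suc (Suc k)) * (z - p) ^ Suc k * e1 z + (z - p) ^ Suc (Suc k) * e2 z)) (at z)"
  proof -
    have "((\<lambda>w. of_nat (Suc (Suc k)) * (w - p) ^ Suc k * e w + (w - p) ^ Suc (Suc k) * e1 w) has_field_derivative
      (of_nat (Suc (Suc k)) * (of_nat (Suc k) * (z - p) ^ k)) * e z + e1 z * (of_nat (Suc (Suc k)) * (z - p) ^ Suc k)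
      + ((of_nat (Suc (Suc k)) * (z - p) ^ Suc k) * e1 z + e2 z * (z - p) ^ Suc (Suc k))) (at z)"
      by (rule DERIV_add[OF DERIV_mult[OF DERIV_cmult[OF pow_der] e_der[OF z]] DERIV_mult[OF pow_der e1_der[OF z]]])
    then show ?thesis by (simp add: algebra_simps)
  qed
  have d2: "(h1 has_field_derivative h2 z) (at z)"
    unfolding h1_def[abs_def] h2_def
    using holomorphic_derivI[OF df_holo U_open zU] by (auto intro!: derivative_eq_intros)
  have "((\<lambda>w. of_nat (Suc (Suc k)) * (w - p) ^ Suc k * e w + (w - p) ^ Suc (Suc k) * e1 w) has_field_derivative h2 z) (at z)"
    by (rule has_field_derivative_transform_within_open[OF d2 open_ball z]) (simp add: h1_form)
  then show ?thesis using d1 DERIV_unique by blast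
qed

lemma ev_ball: "\<forall>\<^sub>F z in at p. z \<in> ball p r1"
  using ev_near[OF r1] by (simp add: dist_norm norm_minus_commute)

lemma bO_h: "bO p (Suc (Suc k)) (\<lambda>z t. h z)"
proof -
  have "bO p (Suc (Suc k) + 0) (\<lambda>z t. (z - p) ^ Suc (Suc k) * e z)"
    by (rule bO_mult[OF bO_pow bO_cont[OF cont_at_p[OF eholo]]])
  then have B: "bO p (Suc (Suc k)) (\<lambda>z t. (z - p) ^ Suc (Suc k) * e z)" by simp
  have "\<forall>\<^sub>F z in at p. \<forall>t\<in>{0..1}. h z = (z - p) ^ Suc (Suc k) * e z"
    using ev_ball by eventually_elim (simp add: h_on_ball)
  then show ?thesis by (rule bO_cong[OF _ B])
qed

end

context bpar begin

lemma bO_h1: "bO p (Suc k) (\<lambda>z t. h1 z)"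
proof -
  have a: "bO p (0 + Suc k + 0) (\<lambda>z t. of_nat (Suc (Suc k)) * (z - p) ^ Suc k * e z)"
    by (rule bO_mult[OF bO_mult[OF bO_const bO_pow] bO_cont[OF cont_at_p[OF eholo]]])
  have b: "bO p (Suc (Suc k) + 0) (\<lambda>z t. (z - p) ^ Suc (Suc k) * e1 z)"
    by (rule bO_mult[OF bO_pow bO_cont[OF cont_at_p[OF e1_holo]]])
  have b': "bO p (Suc k) (\<lambda>z t. (z - p) ^ Suc (Suc k) * e1 z)"
    by (rule bO_mono[OF _ b]) simp
  have c: "bO p (Suc k) (\<lambda>z t. of_nat (Suc (Suc k)) * (z - p) ^ Suc k * e z + (z - p) ^ Suc (Suc k) * e1 z)"
    using bO_add[OF a[simplified] b'] by simp
  have "\<forall>\<^sub>F z in at p. \<forall>t\<in>{0..1}. h1 z = of_nat (Suc (Suc k)) * (z - p) ^ Suc k * e z + (z - p) ^ Suc (Suc k) * e1 z"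
    using ev_ball by eventually_elim (simp add: h1_form)
  then show ?thesis by (rule bO_cong[OF _ c])
qed

lemma bO_h2: "bO p k (\<lambda>z t. h2 z)"
proof -
  have a: "bO p (0 + k + 0) (\<lambda>z t. (of_nat (Suc (Suc k)) * of_nat (Suc k)) * (z - p) ^ k * e z)"
    by (rule bO_mult[OF bO_mult[OF bO_const bO_pow] bO_cont[OF cont_at_p[OF eholo]]])
  have b: "bO p (0 + Suc k + 0) (\<lambda>z t. (2 * of_nat (Suc (Suc k))) * (z - p) ^ Suc k * e1 z)"
    by (rule bO_mult[OF bO_mult[OF bO_const bO_pow] bO_cont[OF cont_at_p[OF e1_holo]]])
  have b': "bO p k (\<lambda>z t. (2 * of_nat (Suc (Suc k))) * (z - p) ^ Suc k * e1 z)"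
    by (rule bO_mono[OF _ b]) simp
  have c: "bO p (Suc (Suc k) + 0) (\<lambda>z t. (z - p) ^ Suc (Suc k) * e2 z)"
    by (rule bO_mult[OF bO_pow bO_cont[OF cont_at_p[OF e2_holo]]])
  have c': "bO p k (\<lambda>z t. (z - p) ^ Suc (Suc k) * e2 z)"
    by (rule bO_mono[OF _ c]) simp
  have d: "bO p k (\<lambda>z t. (of_nat (Suc (Suc k)) * of_nat (Suc k)) * (z - p) ^ k * e z
     + (2 * of_nat (Suc (Suc k))) * (z - p) ^ Suc k * e1 z + (z - p) ^ Suc (Suc k) * e2 z)"
    using bO_add[OF bO_add[OF a[simplified] b'] c'] by simp
  have "\<forall>\<^sub>F z in at p. \<forall>t\<in>{0..1}. h2 z = (of_nat (Suc (Suc k)) * of_nat (Suc k)) * (z - p) ^ k * e z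
     + (2 * of_nat (Suc (Suc k))) * (z - p) ^ Suc k * e1 z + (z - p) ^ Suc (Suc k) * e2 z"
    using ev_ball by eventually_elim (simp add: h2_form mult.assoc)
  then show ?thesis by (rule bO_cong[OF _ d])
qed

lemma bO_hh2: "bO p (2 * Suc k) (\<lambda>z t. h z * h2 z)"
  using bO_mult[OF bO_h bO_h2] by (simp add: mult_2)

definition "Cc = of_nat (Suc (Suc k)) * of_nat (Suc k) * (e p)^2 / 12"

lemma lim_hh2: "((\<lambda>z. h z * h2 z / (z - p) ^ (2 * Suc k)) \<longlongrightarrow> 12 * Cc) (at p)"
proof -
  define Q where "Q z = e z * (of_nat (Suc (Suc k)) * of_nat (Suc k) * e z + 2 * of_nat (Suc (Suc k)) * (z - p) * e1 z
      + (z - p)^2 * e2 z)" for z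
  have "isCont Q p" unfolding Q_def
    using cont_at_p[OF eholo] cont_at_p[OF e1_holo] cont_at_p[OF e2_holo] by (intro continuous_intros)
  then have "(Q \<longlongrightarrow> Q p) (at p)" by (simp add: isCont_def)
  moreover have "Q p = 12 * Cc" by (simp add: Q_def Cc_def power2_eq_square)
  moreover have "\<forall>\<^sub>F z in at p. Q z = h z * h2 z / (z - p) ^ (2 * Suc k)"
    using ev_ball eventually_neq_at_within[of p p UNIV]
  proof eventually_elim
    case (elim z)
    then have zp: "z \<noteq> p" by auto
    define u where "u = z - p"
    have u0: "u \<noteq> 0" using zp by (simp add: u_def)
    have pw: "u ^ (2 * Suc k) = u ^ k * u ^ k * u * u"
      by (simp only: mult_2 power_add power_Suc) (simp add: algebra_simps)
    have "h z * h2 z = u ^ (2 * Suc k) * Q z"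
      unfolding h_on_ball[OF elim(1)] h2_form[OF elim(1)] Q_def pw u_def[symmetric]
      by (simp add: algebra_simps power2_eq_square)
    then show ?case using u0 by (simp add: u_def)
  qed
  ultimately show ?thesis by (auto intro: Lim_transform_eventually)
qed

end

context bpar begin

lemma dh: "s \<in> U \<Longrightarrow> (h has_field_derivative h1 s) (at s within T)"
  unfolding h1_def by (rule h_deriv)

lemma dh1: "s \<in> U \<Longrightarrow> (h1 has_field_derivative h2 s) (at s within T)"
  unfolding h1_def[abs_def] h2_def
  using holomorphic_derivI[OF df_holo U_open, of s T] by (auto intro!: derivative_eq_intros)

lemma h2_eq: "h2 = deriv (deriv f)" by (simp add: h2_def[abs_def])
lemma h3_eq: "h3 = deriv (deriv (deriv f))" by (simp add: h3_def[abs_def])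

lemma h2_holo: "h2 holomorphic_on U"
  unfolding h2_eq by (rule holomorphic_deriv[OF df_holo U_open])

lemma dh2: "s \<in> U \<Longrightarrow> (h2 has_field_derivative h3 s) (at s within T)"
  unfolding h3_def using holomorphic_derivI[OF h2_holo U_open, of s T] by (simp add: h2_eq)

lemma h3_cont: "continuous_on U h3"
  unfolding h3_eq h2_eq[symmetric]
  by (rule holomorphic_on_imp_continuous_on[OF holomorphic_deriv[OF h2_holo U_open]])

lemma taylor_setup:
  obtains rho M where "rho > 0" "cball p rho \<subseteq> U" "M \<ge> 0" "\<And>s. s \<in> cball p rho \<Longrightarrow> norm (h3 s) \<le> M"
proof -
  obtain d where d: "d > 0" "ball p d \<subseteq> U" using U_open pU open_contains_ball by blast
  have sub: "cball p (d/2) \<subseteq> U" using d by (auto simp: subset_iff)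
  have "compact (h3 ` cball p (d/2))"
    by (rule compact_continuous_image[OF continuous_on_subset[OF h3_cont sub] compact_cball])
  then obtain b where b: "b > 0" "\<And>y. y \<in> h3 ` cball p (d/2) \<Longrightarrow> norm y \<le> b"
    using compact_imp_bounded bounded_pos by metis
  show ?thesis using that[of "d/2" b] d sub b by auto
qed

lemma taylor2:
  assumes S: "cball p rho \<subseteq> U" and M: "\<And>s. s \<in> cball p rho \<Longrightarrow> norm (h3 s) \<le> M"
    and z: "z \<in> cball p rho" and w: "w \<in> cball p rho"
  shows "norm (h w - (h z + h1 z * (w - z) + h2 z * (w - z)^2 / 2)) \<le> M * norm (w - z)^3 / 2"
proof -
  define F :: "nat \<Rightarrow> complex \<Rightarrow> complex" where
    "F = (\<lambda>i. if i = 0 then h else if i = 1 then h1 else if i = 2 then h2 else h3)"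
  have F0: "F 0 = h" and F1: "F (Suc 0) = h1" and F2: "F (Suc (Suc 0)) = h2" and F3: "F (Suc (Suc (Suc 0))) = h3"
    by (simp_all add: F_def)
  have der: "(F i has_field_derivative F (Suc i) x) (at x within cball p rho)"
    if "x \<in> cball p rho" "i \<le> 2" for i x
  proof -
    have xU: "x \<in> U" using that S by auto
    have "i = 0 \<or> i = 1 \<or> i = 2" using that(2) by auto
    then show ?thesis
    proof (elim disjE)
      assume "i = 0" then show ?thesis using dh[OF xU] by (simp add: F0 F1)
    next
      assume "i = 1" then show ?thesis using dh1[OF xU] by (simp add: F1 F2)
    next
      assume "i = 2" then show ?thesis using dh2[OF xU] by (simp add: F2 F3 numeral_2_eq_2)
    qed
  qed
  have B: "norm (F (Suc 2) x) \<le> M" if "x \<in> cball p rho" for x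
    using M[OF that] by (simp add: F3 numeral_2_eq_2)
  have "norm (F 0 w - (\<Sum>i\<le>2. F i z * (w - z) ^ i / fact i)) \<le> M * norm (w - z) ^ Suc 2 / fact 2"
    by (rule complex_Taylor[OF convex_cball der B z w])
  moreover have "(\<Sum>i\<le>2. F i z * (w - z) ^ i / fact i) = h z + h1 z * (w - z) + h2 z * (w - z)^2 / 2"
    by (simp add: numeral_2_eq_2 F0 F1 F2)
  ultimately show ?thesis by (simp add: F0 F1 F2 numeral_3_eq_3 numeral_2_eq_2)
qed

lemma taylor1:
  assumes S: "cball p rho \<subseteq> U" and M: "\<And>s. s \<in> cball p rho \<Longrightarrow> norm (h3 s) \<le> M"
    and z: "z \<in> cball p rho" and w: "w \<in> cball p rho"
  shows "norm (h1 w - (h1 z + h2 z * (w - z))) \<le> M * norm (w - z)^2"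
proof -
  define F :: "nat \<Rightarrow> complex \<Rightarrow> complex" where
    "F = (\<lambda>i. if i = 0 then h1 else if i = 1 then h2 else h3)"
  have F0: "F 0 = h1" and F1: "F (Suc 0) = h2" and F2: "F (Suc (Suc 0)) = h3"
    by (simp_all add: F_def)
  have der: "(F i has_field_derivative F (Suc i) x) (at x within cball p rho)"
    if "x \<in> cball p rho" "i \<le> 1" for i x
  proof -
    have xU: "x \<in> U" using that S by auto
    have "i = 0 \<or> i = 1" using that(2) by auto
    then show ?thesis
    proof (elim disjE)
      assume "i = 0" then show ?thesis using dh1[OF xU] by (simp add: F0 F1)
    next
      assume "i = 1" then show ?thesis using dh2[OF xU] by (simp add: F1 F2)
    qed
  qed
  have B: "norm (F (Suc 1) x) \<le> M" if "x \<in> cball p rho" for x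
    using M[OF that] by (simp add: F2)
  have "norm (F 0 w - (\<Sum>i\<le>1. F i z * (w - z) ^ i / fact i)) \<le> M * norm (w - z) ^ Suc 1 / fact 1"
    by (rule complex_Taylor[OF convex_cball der B z w])
  moreover have "(\<Sum>i\<le>1. F i z * (w - z) ^ i / fact i) = h1 z + h2 z * (w - z)"
    by (simp add: F0 F1)
  ultimately show ?thesis by (simp add: F0 F1 numeral_2_eq_2)
qed

end

context bpar begin

lemma bO_hh: "bO p (2 * Suc (Suc k)) (\<lambda>z t. h z * h z)"
  using bO_mult[OF bO_h bO_h] by (simp add: mult_2)

lemma wz_minus: "wz z t - z = of_real t * h z" by (simp add: wz_def)

lemma norm_t_le: "t \<in> {0..1} \<Longrightarrow> norm (of_real t * (x::complex)) \<le> norm x"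
  by (auto simp: norm_mult intro!: mult_left_le_one_le)

lemma bO_eX: "bO p (2 * Suc (Suc k)) (\<lambda>z t. h1 (wz z t) - h1 z - of_real t * (h z * h2 z))"
proof -
  obtain rho M where rho: "rho > 0" "cball p rho \<subseteq> U" "M \<ge> 0" "\<And>s. s \<in> cball p rho \<Longrightarrow> norm (h3 s) \<le> M"
    using taylor_setup by blast
  have "\<forall>\<^sub>F z in at p. \<forall>t\<in>{0..1}. norm (h1 (wz z t) - h1 z - of_real t * (h z * h2 z)) \<le> M * norm (h z * h z)"
    using wz_near[OF rho(1)]
  proof eventually_elim
    case (elim z)
    show ?case
    proof
      fix t :: real assume t: "t \<in> {0..1}"
      have zb: "z \<in> ball p rho" "wz z t \<in> ball p rho" using elim(1) t by auto
      then have zc: "z \<in> cball p rho" "wz z t \<in> cball p rho" using ball_subset_cball by blast+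
      have "norm (h1 (wz z t) - (h1 z + h2 z * (wz z t - z))) \<le> M * norm (wz z t - z)^2"
        by (rule taylor1[OF rho(2) rho(4) zc])
      moreover have "h1 (wz z t) - (h1 z + h2 z * (wz z t - z)) = h1 (wz z t) - h1 z - of_real t * (h z * h2 z)"
        by (simp add: wz_minus algebra_simps)
      moreover have "norm (wz z t - z)^2 \<le> norm (h z * h z)"
        using power_mono[OF norm_t_le[OF t, of "h z"], of 2]
        by (simp add: wz_minus norm_mult power2_eq_square)
      ultimately show "norm (h1 (wz z t) - h1 z - of_real t * (h z * h2 z)) \<le> M * norm (h z * h z)"
        using rho(3) by (metis mult_left_mono order_trans)
    qed
  qed
  then show ?thesis by (rule bO_le[OF _ bO_hh])
qed

lemma bO_eR: "bO p (2 * Suc (Suc k)) (\<lambda>z t. R z t - (1 + of_real t * h1 z + (of_real t)^2 * (h z * h2 z) / 2))"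
proof -
  obtain rho M where rho: "rho > 0" "cball p rho \<subseteq> U" "M \<ge> 0" "\<And>s. s \<in> cball p rho \<Longrightarrow> norm (h3 s) \<le> M"
    using taylor_setup by blast
  have "\<forall>\<^sub>F z in at p. \<forall>t\<in>{0..1}. norm (R z t - (1 + of_real t * h1 z + (of_real t)^2 * (h z * h2 z) / 2))
      \<le> (M/2) * norm (h z * h z)"
    using wz_near[OF rho(1)] good_ev
  proof eventually_elim
    case (elim z)
    show ?case
    proof
      fix t :: real assume t: "t \<in> {0..1}"
      have zb: "z \<in> ball p rho" "wz z t \<in> ball p rho" using elim(1) t by auto
      then have zc: "z \<in> cball p rho" "wz z t \<in> cball p rho" using ball_subset_cball by blast+
      have hz: "h z \<noteq> 0" using good_hw[OF elim(2) t] by simp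
      define D where "D = h (wz z t) - (h z + h1 z * (wz z t - z) + h2 z * (wz z t - z)^2 / 2)"
      have nD: "norm D \<le> M * norm (wz z t - z)^3 / 2"
        unfolding D_def by (rule taylor2[OF rho(2) rho(4) zc])
      have n3: "norm (wz z t - z)^3 \<le> norm (h z)^3"
        using power_mono[OF norm_t_le[OF t, of "h z"], of 3] by (simp add: wz_minus)
      have eq: "R z t - (1 + of_real t * h1 z + (of_real t)^2 * (h z * h2 z) / 2) = D / h z"
        using hz by (simp add: R_def D_def wz_minus field_simps power2_eq_square)
      have "norm (D / h z) = norm D / norm (h z)" by (simp add: norm_divide)
      also have "\<dots> \<le> (M * norm (h z)^3 / 2) / norm (h z)"
        using nD n3 rho(3) hz by (intro divide_right_mono order_trans[OF nD]) (auto intro: mult_left_mono)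
      also have "\<dots> = (M/2) * norm (h z * h z)"
        using hz by (simp add: norm_mult power3_eq_cube field_simps)
      finally show "norm (R z t - (1 + of_real t * h1 z + (of_real t)^2 * (h z * h2 z) / 2)) \<le> (M/2) * norm (h z * h z)"
        unfolding eq .
    qed
  qed
  then show ?thesis by (rule bO_le[OF _ bO_hh])
qed

lemma bO_X: "bO p (Suc k) (\<lambda>z t. h1 (wz z t))"
proof -
  have a: "bO p (Suc k) (\<lambda>z t. of_real t * (h z * h2 z))"
    by (rule bO_mono[OF _ bO_t[OF bO_hh2]]) simp
  have b: "bO p (Suc k) (\<lambda>z t. h1 (wz z t) - h1 z - of_real t * (h z * h2 z))"
    by (rule bO_mono[OF _ bO_eX]) simp
  have "bO p (Suc k) (\<lambda>z t. h1 z + of_real t * (h z * h2 z) + (h1 (wz z t) - h1 z - of_real t * (h z * h2 z)))"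
    by (rule bO_add[OF bO_add[OF bO_h1 a] b])
  then show ?thesis by simp
qed

lemma X_small: "\<forall>\<^sub>F z in at p. \<forall>t\<in>{0..1}. norm (h1 (wz z t)) \<le> 1/10"
  by (rule uoD[OF bO_uo[OF bO_X]]) simp

lemma bO_eA: "bO p (3 * Suc k) (\<lambda>z t. buff_factor (deriv f (wz z t)) - (1 + h1 (wz z t)/2 - (h1 (wz z t))^2/12))"
proof -
  have X3: "bO p (3 * Suc k) (\<lambda>z t. h1 (wz z t) * h1 (wz z t) * h1 (wz z t))"
    using bO_mult[OF bO_mult[OF bO_X bO_X] bO_X] by (simp add: numeral_3_eq_3 algebra_simps)
  have "\<forall>\<^sub>F z in at p. \<forall>t\<in>{0..1}. norm (buff_factor (deriv f (wz z t)) - (1 + h1 (wz z t)/2 - (h1 (wz z t))^2/12))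
     \<le> 66 * norm (h1 (wz z t) * h1 (wz z t) * h1 (wz z t))"
    using X_small
  proof eventually_elim
    case (elim z)
    show ?case
    proof
      fix t :: real assume t: "t \<in> {0..1}"
      have "deriv f (wz z t) = 1 + h1 (wz z t)" by (simp add: h1_def)
      then show "norm (buff_factor (deriv f (wz z t)) - (1 + h1 (wz z t)/2 - (h1 (wz z t))^2/12))
         \<le> 66 * norm (h1 (wz z t) * h1 (wz z t) * h1 (wz z t))"
        using buff_taylor[of "h1 (wz z t)"] elim t by (simp add: norm_mult power3_eq_cube)
    qed
  qed
  then show ?thesis by (rule bO_le[OF _ X3])
qed

end

lemma main_identity:
  fixes a x r h1 hh t :: complex
  defines "E \<equiv> h1/2 + t * hh/2 - h1^2/12 - t * h1 - t * h1^2/2 + t^2 * h1^2 - t^2 * hh/2"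
    and "E2 \<equiv> t * hh/2 - h1^2/12 - t * h1^2/2 + t^2 * h1^2 - t^2 * hh/2"
  shows "a - (1 + E) * r = (a - (1 + x/2 - x^2/12)) + (x - h1 - t * hh)/2 - (x - h1) * (x + h1)/12
     - E2 * (t * h1) - E * (t * t * hh)/2 - (1 + E) * (r - (1 + t * h1 + t^2 * hh/2))"
  unfolding E_def E2_def by (simp add: field_simps power2_eq_square)

context bpar begin

definition "Ee z t = h1 z/2 + of_real t * (h z * h2 z)/2 - (h1 z)^2/12 - of_real t * h1 z
   - of_real t * (h1 z)^2/2 + (of_real t)^2 * (h1 z)^2 - (of_real t)^2 * (h z * h2 z)/2"

definition "E2 z t = of_real t * (h z * h2 z)/2 - (h1 z)^2/12
   - of_real t * (h1 z)^2/2 + (of_real t)^2 * (h1 z)^2 - (of_real t)^2 * (h z * h2 z)/2"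

lemma bO_cmul: "bO p n F \<Longrightarrow> bO p n (\<lambda>z t. c * F z t)"
  using bO_mult[OF bO_const, of p n F c] by simp

lemma bO_h1sq: "bO p (2 * Suc k) (\<lambda>z t. (h1 z)^2)"
  using bO_mult[OF bO_h1 bO_h1] by (simp add: power2_eq_square mult_2)

lemma bO_E2: "bO p (2 * Suc k) E2"
proof -
  have a: "bO p (2 * Suc k) (\<lambda>z t. of_real t * (h z * h2 z))" by (rule bO_t[OF bO_hh2])
  have b: "bO p (2 * Suc k) (\<lambda>z t. of_real t * (h1 z)^2)" by (rule bO_t[OF bO_h1sq])
  have c: "bO p (2 * Suc k) (\<lambda>z t. of_real t * (of_real t * (h1 z)^2))" by (rule bO_t[OF b])
  have d: "bO p (2 * Suc k) (\<lambda>z t. of_real t * (of_real t * (h z * h2 z)))" by (rule bO_t[OF a])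
  have "bO p (2 * Suc k) (\<lambda>z t. (1/2) * (of_real t * (h z * h2 z)) - (1/12) * (h1 z)^2
     - (1/2) * (of_real t * (h1 z)^2) + of_real t * (of_real t * (h1 z)^2) - (1/2) * (of_real t * (of_real t * (h z * h2 z))))"
    by (intro bO_diff bO_add bO_cmul a b c d bO_h1sq)
  then show ?thesis unfolding E2_def[abs_def] by (simp add: power2_eq_square field_simps)
qed

lemma Ee_E2: "Ee z t = h1 z/2 - of_real t * h1 z + E2 z t"
  by (simp add: Ee_def E2_def)

lemma bO_Ee: "bO p (Suc k) Ee"
proof -
  have "bO p (Suc k) (\<lambda>z t. (1/2) * h1 z - of_real t * h1 z + E2 z t)"
    by (intro bO_add bO_diff bO_cmul bO_t bO_h1 bO_mono[OF _ bO_E2]) simp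
  then show ?thesis by (simp add: Ee_E2[abs_def])
qed

lemma bO_main: "bO p (Suc (2 * Suc k)) (\<lambda>z t. buff_factor (deriv f (wz z t)) - (1 + Ee z t) * R z t)"
proof -
  define X where "X z t = h1 (wz z t)" for z t
  have t1: "bO p (Suc (2 * Suc k)) (\<lambda>z t. buff_factor (deriv f (wz z t)) - (1 + X z t/2 - (X z t)^2/12))"
    by (rule bO_mono[OF _ bO_eA[folded X_def]]) simp
  have t2: "bO p (Suc (2 * Suc k)) (\<lambda>z t. (X z t - h1 z - of_real t * (h z * h2 z)) / 2)"
    using bO_mono[OF _ bO_cmul[OF bO_eX[folded X_def], of "1/2"], of "Suc (2 * Suc k)"] by simp
  have XmH: "bO p (2 * Suc k) (\<lambda>z t. X z t - h1 z)"
  proof -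
    have "bO p (2 * Suc k) (\<lambda>z t. of_real t * (h z * h2 z) + (X z t - h1 z - of_real t * (h z * h2 z)))"
      by (rule bO_add[OF bO_t[OF bO_hh2] bO_mono[OF _ bO_eX[folded X_def]]]) simp
    then show ?thesis by simp
  qed
  have XpH: "bO p (Suc k) (\<lambda>z t. X z t + h1 z)"
    by (rule bO_add[OF bO_X[folded X_def] bO_h1])
  have t3: "bO p (Suc (2 * Suc k)) (\<lambda>z t. (X z t - h1 z) * (X z t + h1 z) / 12)"
    using bO_mono[OF _ bO_cmul[OF bO_mult[OF XmH XpH], of "1/12"], of "Suc (2 * Suc k)"] by simp
  have t4: "bO p (Suc (2 * Suc k)) (\<lambda>z t. E2 z t * (of_real t * h1 z))"
    by (rule bO_mono[OF _ bO_mult[OF bO_E2 bO_t[OF bO_h1]]]) simp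
  have tthh: "bO p (2 * Suc k) (\<lambda>z t. of_real t * of_real t * (h z * h2 z))"
    using bO_t[OF bO_t[OF bO_hh2]] by (simp add: mult.assoc)
  have t5: "bO p (Suc (2 * Suc k)) (\<lambda>z t. Ee z t * (of_real t * of_real t * (h z * h2 z)) / 2)"
    using bO_mono[OF _ bO_cmul[OF bO_mult[OF bO_Ee tthh], of "1/2"], of "Suc (2 * Suc k)"] by simp
  have oneE: "bO p 0 (\<lambda>z t. 1 + Ee z t)"
    by (rule bO_add[OF bO_const bO_mono[OF _ bO_Ee]]) simp
  have t6: "bO p (Suc (2 * Suc k)) (\<lambda>z t. (1 + Ee z t) * (R z t - (1 + of_real t * h1 z + (of_real t)^2 * (h z * h2 z) / 2)))"
    by (rule bO_mono[OF _ bO_mult[OF oneE bO_eR]]) simp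
  have all: "bO p (Suc (2 * Suc k)) (\<lambda>z t.
      (buff_factor (deriv f (wz z t)) - (1 + X z t/2 - (X z t)^2/12))
      + (X z t - h1 z - of_real t * (h z * h2 z)) / 2 - (X z t - h1 z) * (X z t + h1 z) / 12
      - E2 z t * (of_real t * h1 z) - Ee z t * (of_real t * of_real t * (h z * h2 z)) / 2
      - (1 + Ee z t) * (R z t - (1 + of_real t * h1 z + (of_real t)^2 * (h z * h2 z) / 2)))"
    by (rule bO_diff[OF bO_diff[OF bO_diff[OF bO_diff[OF bO_add[OF t1 t2] t3] t4] t5] t6])
  have eq: "buff_factor (deriv f (wz z t)) - (1 + Ee z t) * R z t =
      (buff_factor (deriv f (wz z t)) - (1 + X z t/2 - (X z t)^2/12))
      + (X z t - h1 z - of_real t * (h z * h2 z)) / 2 - (X z t - h1 z) * (X z t + h1 z) / 12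
      - E2 z t * (of_real t * h1 z) - Ee z t * (of_real t * of_real t * (h z * h2 z)) / 2
      - (1 + Ee z t) * (R z t - (1 + of_real t * h1 z + (of_real t)^2 * (h z * h2 z) / 2))" for z t
    unfolding Ee_def E2_def by (rule main_identity)
  show ?thesis
    by (rule bO_cong[OF _ all]) (simp add: eq)
qed

end

context bpar begin

lemma bO_PhiE: "bO p (Suc (2 * Suc k)) (\<lambda>z t. Phi z t - 1 - Ee z t)"
proof -
  have a: "bO p (Suc (2 * Suc k)) (\<lambda>z t. (buff_factor (deriv f (wz z t)) - (1 + Ee z t) * R z t) / R z t)"
    by (rule bO_div[OF bO_main _ R_lb]) (use mm_pos in simp)
  have "\<forall>\<^sub>F z in at p. \<forall>t\<in>{0..1}. Phi z t - 1 - Ee z t = (buff_factor (deriv f (wz z t)) - (1 + Ee z t) * R z t) / R z t"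
    using good_ev
  proof eventually_elim
    case (elim z)
    show ?case
    proof
      fix t :: real assume t: "t \<in> {0..1}"
      have "norm (R z t) \<ge> mm/2" using elim t by (auto simp: good_def)
      then have "R z t \<noteq> 0" using mm_pos by auto
      then show "Phi z t - 1 - Ee z t = (buff_factor (deriv f (wz z t)) - (1 + Ee z t) * R z t) / R z t"
        by (simp add: Phi_eq[OF elim t] diff_divide_distrib)
    qed
  qed
  then show ?thesis by (rule bO_cong[OF _ a])
qed

lemma int_Ee: "(Ee z has_integral (h z * h2 z / 12)) {0..1}"
proof -
  define c0 where "c0 = h1 z/2 - (h1 z)^2/12"
  define c1 where "c1 = (h z * h2 z)/2 - h1 z - (h1 z)^2/2"
  define c2 where "c2 = (h1 z)^2 - (h z * h2 z)/2"
  define F where "F x = c0 * x + c1 * x^2/2 + c2 * x^3/3" for x :: complex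
  have Ee_eq: "Ee z t = c0 + c1 * of_real t + c2 * (of_real t)^2" for t
    by (simp add: Ee_def c0_def c1_def c2_def algebra_simps)
  have der: "(F has_field_derivative (c0 + c1 * x + c2 * x^2)) (at x)" for x
    unfolding F_def by (auto intro!: derivative_eq_intros simp: field_simps power2_eq_square)
  have I: "((\<lambda>t. c0 + c1 * of_real t + c2 * (of_real t)^2) has_integral (F (of_real 1) - F (of_real 0))) {0..1}"
    by (rule fundamental_theorem_of_calculus) (auto intro!: has_vector_derivative_real_field der)
  have v: "F (of_real 1) - F (of_real 0) = h z * h2 z / 12"
    by (simp add: F_def c0_def c1_def c2_def field_simps power2_eq_square)
  have ee: "Ee z = (\<lambda>t. c0 + c1 * of_real t + c2 * (of_real t)^2)"
    by (rule ext) (simp add: Ee_eq)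
  show ?thesis using I unfolding v ee .
qed

lemma G_exp: "\<exists>K. \<forall>\<^sub>F z in at p. norm (G z - h z * h2 z / 12) \<le> K * norm (z - p) ^ Suc (2 * Suc k)"
proof -
  obtain K where K: "K \<ge> 0" "\<forall>\<^sub>F z in at p. \<forall>t\<in>{0..1}. norm (Phi z t - 1 - Ee z t) \<le> K * norm (z - p) ^ Suc (2 * Suc k)"
    using bO_PhiE bOE by blast
  have "\<forall>\<^sub>F z in at p. norm (G z - h z * h2 z / 12) \<le> K * norm (z - p) ^ Suc (2 * Suc k)"
    using K(2) good_ev
  proof eventually_elim
    case (elim z)
    let ?B = "K * norm (z - p) ^ Suc (2 * Suc k)"
    have i1: "(Phi z has_integral integral {0..1} (Phi z)) {0..1}"
      using integrable_continuous_interval[OF Phi_cont[OF elim(2)]] by (simp add: has_integral_integral)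
    have i2: "((\<lambda>t::real. 1::complex) has_integral 1) {0..1}"
      using has_integral_const_real[of "1::complex" 0 1] by simp
    have "((\<lambda>t. Phi z t - 1 - Ee z t) has_integral (integral {0..1} (Phi z) - 1 - h z * h2 z / 12)) {0..1}"
      by (intro has_integral_diff i1 i2 int_Ee)
    moreover have "G z - h z * h2 z / 12 = integral {0..1} (Phi z) - 1 - h z * h2 z / 12"
      by (simp add: G_def)
    ultimately have I: "((\<lambda>t. Phi z t - 1 - Ee z t) has_integral (G z - h z * h2 z / 12)) {0..1}"
      by simp
    have "norm (G z - h z * h2 z / 12) \<le> ?B * Henstock_Kurzweil_Integration.content (cbox (0::real) 1)"
      by (rule has_integral_bound[of ?B "\<lambda>t. Phi z t - 1 - Ee z t"])
         (use I elim(1) K(1) in auto)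
    moreover have c1: "Henstock_Kurzweil_Integration.content (cbox (0::real) 1) = 1" by simp
    ultimately show ?case by (simp only: c1 mult_1_right)
  qed
  then show ?thesis by blast
qed

lemma gg_lim: "((\<lambda>z. gg z / (z - p) ^ (2 * Suc k)) \<longlongrightarrow> Cc) (at p)"
proof -
  obtain K where K: "\<forall>\<^sub>F z in at p. norm (G z - h z * h2 z / 12) \<le> K * norm (z - p) ^ Suc (2 * Suc k)"
    using G_exp by blast
  have lim1: "((\<lambda>z. (G z - h z * h2 z / 12) / (z - p) ^ (2 * Suc k)) \<longlongrightarrow> 0) (at p)"
  proof (rule Lim_null_comparison)
    show "\<forall>\<^sub>F z in at p. norm ((G z - h z * h2 z / 12) / (z - p) ^ (2 * Suc k)) \<le> K * norm (z - p)"
      using K eventually_neq_at_within[of p p UNIV]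
    proof eventually_elim
      case (elim z)
      have pos: "norm (z - p) ^ (2 * Suc k) > 0" using elim(2) by simp
      have "norm ((G z - h z * h2 z / 12) / (z - p) ^ (2 * Suc k))
          = norm (G z - h z * h2 z / 12) / norm (z - p) ^ (2 * Suc k)"
        by (simp only: norm_divide norm_power)
      also have "\<dots> \<le> (K * norm (z - p) ^ Suc (2 * Suc k)) / norm (z - p) ^ (2 * Suc k)"
        by (rule divide_right_mono[OF elim(1)]) simp
      also have "\<dots> = K * norm (z - p)" using pos by (simp add: field_simps)
      finally show ?case .
    qed
    have "((\<lambda>z. K * norm (z - p)) \<longlongrightarrow> K * norm (p - p)) (at p)"
      by (intro tendsto_intros)
    then show "((\<lambda>z. K * norm (z - p)) \<longlongrightarrow> 0) (at p)" by simp
  qed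
  have lim2: "((\<lambda>z. (h z * h2 z / (z - p) ^ (2 * Suc k)) / 12) \<longlongrightarrow> 12 * Cc / 12) (at p)"
    by (intro tendsto_divide lim_hh2 tendsto_const) simp
  have "((\<lambda>z. (G z - h z * h2 z / 12) / (z - p) ^ (2 * Suc k) + (h z * h2 z / (z - p) ^ (2 * Suc k)) / 12)
      \<longlongrightarrow> 0 + 12 * Cc / 12) (at p)"
    by (rule tendsto_add[OF lim1 lim2])
  moreover have "\<forall>\<^sub>F z in at p. (G z - h z * h2 z / 12) / (z - p) ^ (2 * Suc k) + (h z * h2 z / (z - p) ^ (2 * Suc k)) / 12
      = gg z / (z - p) ^ (2 * Suc k)"
    using eventually_neq_at_within[of p p UNIV]
  proof eventually_elim
    case (elim z)
    have "(a - b / 12) / d + (b / d) / 12 = a / d" for a b d :: complex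
      by (simp add: diff_divide_distrib divide_divide_eq_left mult.commute)
    then show ?case using elim by (simp add: gg_def)
  qed
  ultimately show ?thesis by (auto intro: Lim_transform_eventually)
qed

lemma Cc_nz: "Cc \<noteq> 0"
proof -
  have a: "(of_nat (Suc (Suc k)) :: complex) \<noteq> 0" "(of_nat (Suc k) :: complex) \<noteq> 0"
    by (simp_all only: of_nat_eq_0_iff)
  show ?thesis using ep a unfolding Cc_def by simp
qed

lemma zero_order: "zero_of_order gg p (2 * Suc k)"
proof -
  obtain r where r: "r > 0" "gg holomorphic_on ball p r" using gg_holo by blast
  define kk where "kk z = (if z = p then Cc else gg z / (z - p) ^ (2 * Suc k))" for z
  have H: "kk holomorphic_on (ball p r - {p})"
  proof -
    have "(\<lambda>z. gg z / (z - p) ^ (2 * Suc k)) holomorphic_on (ball p r - {p})"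
      using holomorphic_on_subset[OF r(2)] by (intro holomorphic_intros) auto
    then show ?thesis by (rule holomorphic_transform) (auto simp: kk_def)
  qed
  have L: "(kk \<longlongrightarrow> kk z) (at z within ball p r)" if "z \<in> {p}" for z
  proof -
    have "(kk \<longlongrightarrow> Cc) (at p)"
      using gg_lim by (rule Lim_transform_eventually)
        (use eventually_neq_at_within[of p p UNIV] in \<open>eventually_elim, simp add: kk_def\<close>)
    then show ?thesis using that by (auto simp: kk_def intro: tendsto_within_subset)
  qed
  have "kk holomorphic_on ball p r" by (rule no_isolated_singularity'[OF L H]) auto
  moreover have "kk p \<noteq> 0" using Cc_nz by (simp add: kk_def)
  moreover have "\<forall>w\<in>ball p r. gg w = (w - p) ^ (2 * Suc k) * kk w"
    by (auto simp: kk_def gg_def)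
  ultimately show ?thesis unfolding zero_of_order_def using r(1) by blast
qed

end

theorem lemma3p4:
  fixes U :: "complex set" and f :: "complex \<Rightarrow> complex" and p :: complex
  assumes "open U" and "connected U" and "bounded U" and "convex U"
    and "smooth_jordan_curve (frontier U)"
    and "\<exists>W. open W \<and> closure U \<subseteq> W \<and> f holomorphic_on W"
    and "\<forall>z\<in>U. Re (deriv f z) > 0"
    and "\<forall>z\<in>frontier U. f z \<noteq> z"
    and "p \<in> U" and "f p = p"
  shows "\<exists>r>0. \<exists>g. g holomorphic_on ball p r \<and> g p = 0 \<and>
           (\<forall>z\<in>ball p r \<inter> Vstar U f. g z = buff_u f z) \<and>
           (\<forall>q::nat. q \<ge> 1 \<and> deriv f p = 1 \<and> zero_of_order (\<lambda>z. f z - z) p (q + 1)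
               \<longrightarrow> zero_of_order g p (2 * q))"
proof -
  note Uo = assms(1) and Uc = assms(2) and Ucv = assms(4) and re = assms(7) and pU = assms(9) and fp = assms(10)
  obtain W where W: "open W" "closure U \<subseteq> W" "f holomorphic_on W" using assms(6) by blast
  have holf: "f holomorphic_on U"
    using holomorphic_on_subset[OF W(3)] W(2) closure_subset by blast
  obtain r0 where r0: "r0 > 0" "ball p r0 \<subseteq> U" using Uo pU open_contains_ball by blast
  show ?thesis
  proof (cases "\<exists>r>0. \<forall>z\<in>ball p r. f z = z")
    case True
    then obtain r where r: "r > 0" "\<And>z. z \<in> ball p r \<Longrightarrow> f z = z" by blast
    have noz: "\<not> zero_of_order (\<lambda>z. f z - z) p n" for n
    proof
      assume "zero_of_order (\<lambda>z. f z - z) p n"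
      then obtain r' hh where r': "r' > 0" "hh holomorphic_on ball p r'" "hh p \<noteq> 0"
        "\<And>w. w \<in> ball p r' \<Longrightarrow> f w - w = (w - p) ^ n * hh w"
        unfolding zero_of_order_def by blast
      have "isCont hh p"
        using holomorphic_on_imp_continuous_on[OF r'(2)] r'(1)
        by (simp add: continuous_on_eq_continuous_at)
      then have l1: "(hh \<longlongrightarrow> hh p) (at p)" by (simp add: isCont_def)
      have "\<forall>\<^sub>F w in at p. w \<in> ball p (min r r') \<and> w \<noteq> p"
        using eventually_at[of "\<lambda>w. w \<in> ball p (min r r') \<and> w \<noteq> p" p UNIV] r r'(1)
        by (auto intro!: exI[of _ "min r r'"] simp: dist_commute)
      then have "\<forall>\<^sub>F w in at p. 0 = hh w"
      proof eventually_elim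
        case (elim w)
        then have "(w - p) ^ n * hh w = 0" using r(2)[of w] r'(4)[of w] by auto
        then show ?case using elim by auto
      qed
      then have l2: "(hh \<longlongrightarrow> 0) (at p)" by (rule Lim_transform_eventually[OF tendsto_const])
      have "hh p = 0" using tendsto_unique[OF _ l1 l2] by simp
      with r'(3) show False by simp
    qed
    show ?thesis
    proof (intro exI[of _ r] exI[of _ "\<lambda>z. 0::complex"] conjI allI impI ballI)
      show "(\<lambda>z. 0::complex) holomorphic_on ball p r" by simp
      fix z assume "z \<in> ball p r \<inter> Vstar U f"
      then show "0 = buff_u f z" using r(2) by (auto simp: Vstar_def)
    qed (use r noz in auto)
  next
    case False
    then obtain \<beta> where \<beta>: "\<beta> \<in> ball p r0" "f \<beta> \<noteq> \<beta>" using r0(1) by auto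
    have hol0: "(\<lambda>z. f z - z) holomorphic_on ball p r0"
      using holomorphic_on_subset[OF holf r0(2)] by (intro holomorphic_intros)
    obtain r where r: "0 < r" "ball p r \<subseteq> ball p r0" "\<And>z. z \<in> ball p r - {p} \<Longrightarrow> f z - z \<noteq> 0"
      by (rule isolated_zeros[OF hol0 open_ball connected_ball _ _ \<beta>(1)]) (use r0 fp \<beta> in auto)
    have iso: "\<forall>\<^sub>F z in at p. f z \<noteq> z"
      using eventually_at[of "\<lambda>z. f z \<noteq> z" p UNIV] r
      by (auto intro!: exI[of _ r] simp: dist_commute)
    interpret B: bset f U p
      by unfold_locales (use Uo Ucv holf re pU fp iso in auto)
    obtain rr where rr: "rr > 0" "B.gg holomorphic_on ball p rr" using B.gg_holo by blast
    show ?thesis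
    proof (intro exI[of _ rr] exI[of _ B.gg] conjI allI impI ballI)
      show "B.gg p = 0" by (simp add: B.gg_def)
    next
      fix z assume z: "z \<in> ball p rr \<inter> Vstar U f"
      then have "z \<noteq> p" using fp by (auto simp: Vstar_def)
      then show "B.gg z = buff_u f z" by (simp add: B.gg_def B.buff_u_G)
    next
      fix q :: nat
      assume q: "1 \<le> q \<and> deriv f p = 1 \<and> zero_of_order (\<lambda>z. f z - z) p (q + 1)"
      then obtain k where k: "q = Suc k" by (cases q) auto
      obtain r1 e where e: "r1 > 0" "e holomorphic_on ball p r1" "e p \<noteq> 0"
        "\<And>w. w \<in> ball p r1 \<Longrightarrow> f w - w = (w - p) ^ (q + 1) * e w"
        using q unfolding zero_of_order_def by blast
      define r2 where "r2 = min r1 r0"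
      interpret P: bpar f U p k e r2
      proof unfold_locales
        show "r2 > 0" using e(1) r0(1) by (simp add: r2_def)
        show "ball p r2 \<subseteq> U" using r0(2) by (auto simp: r2_def)
        show "e holomorphic_on ball p r2"
          by (rule holomorphic_on_subset[OF e(2)]) (auto simp: r2_def)
        show "e p \<noteq> 0" by (rule e(3))
        fix w assume "w \<in> ball p r2"
        then show "f w - w = (w - p) ^ Suc (Suc k) * e w" using e(4)[of w] k by (simp add: r2_def)
      qed
      show "zero_of_order B.gg p (2 * q)" using P.zero_order k by simp
    qed (use rr in auto)
  qed
qed


end
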